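(* For every Frankenstein graph $\mathfrak F$ (with its given partition $\{\mathsf G_1,\dots,\mathsf G_m\}$), the auxiliary bipartite graph $G(\mathfrak F)$ is acyclic, i.e. it is a forest.
   Context: A (colored) graph is a finite set $\mathsf G$ of pairs $(e,\alpha)$, where the $e$'s are pairwise distinct 2-element subsets of a vertex set and $\alpha$ is a color (colors may repeat). $V(\mathsf G)$ is its vertex set and $\chi(\mathsf G)$ its set of colors; $\mathsf G$ is rainbow if $|\chi(\mathsf G)|=|\mathsf G|$ and almost rainbow if $|\chi(\mathsf G)|=|\mathsf G|-1$. A subgraph is a subset. Paths, cycles, trees are colored graphs whose underlying uncolored edges form a path (two distinct terminals), cycle, or tree; lengths count edges. A long rainbow odd cycle is a rainbow cycle of odd length at least $7$. A theta graph is a union $\mathsf P_1\cup\mathsf P_2\cup\mathsf P_3$ of three paths with the same terminals $s\neq t$ such that any two share no vertex other than $s,t$ and no underlying uncolored edge. A bad piece is an almost rainbow theta graph with at least $6$ vertices that is the union of three rainbow paths as in the definition of a theta graph. A partition of a graph $\mathsf G$ is a collection $\{\mathsf G_1,\dots,\mathsf G_m\}$ of graphs with $\mathsf G=\bigcup_i\mathsf G_i$ and, for $i\ne j$, $|V(\mathsf G_i)\cap V(\mathsf G_j)|\le 1$ and $\chi(\mathsf G_i)\cap\chi(\mathsf G_j)=\emptyset$; its members are called parts. A Frankenstein graph is a graph $\mathfrak F$ together with a partition $\{\mathsf C_1,\dots,\mathsf C_c,\mathsf B_1,\dots,\mathsf B_b,\mathsf T_1,\dots,\mathsf T_t\}$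 ($c,b,t\ge0$, $c+b+t\ge1$) in which the $\mathsf C_i$ are long rainbow odd cycles, the $\mathsf B_i$ are bad pieces and the $\mathsf T_i$ are rainbow trees, such that (F1) $V(\mathsf T_p)\cap V(\mathsf T_q)=\emptyset$ for $p\neq q$, and (F2) no subgraph of $\mathfrak F$ is a rainbow even cycle. The auxiliary graph $G(\mathfrak F)$ is the uncolored bipartite graph with parts $V_1=\{\mathsf G_1,\dots,\mathsf G_m\}$ and $V_2=$ the set of vertices $v$ that are the common vertex of two distinct parts $\mathsf G_i,\mathsf G_j$, with an edge between $\mathsf G\in V_1$ and $v\in V_2$ iff $v\in V(\mathsf G)$. *)

theory Defs
  imports Main
begin

definition upath_edges :: "'v list \<Rightarrow> 'v set set" where
  "upath_edges vs = {{vs ! i, vs ! Suc i} | i. Suc i < length vs}"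

definition is_upath :: "'v set set \<Rightarrow> 'v \<Rightarrow> 'v \<Rightarrow> bool" where
  "is_upath E s t \<longleftrightarrow> (\<exists>vs. distinct vs \<and> length vs \<ge> 2 \<and> hd vs = s \<and> last vs = t
      \<and> E = upath_edges vs)"

definition is_ucycle :: "'v set set \<Rightarrow> bool" where
  "is_ucycle E \<longleftrightarrow> (\<exists>vs. distinct vs \<and> length vs \<ge> 3
      \<and> E = {{vs ! i, vs ! ((Suc i) mod length vs)} | i. i < length vs})"

definition uadj :: "'v set set \<Rightarrow> ('v \<times> 'v) set" where
  "uadj E = {(x, y). {x, y} \<in> E}"

definition uconnected :: "'v set set \<Rightarrow> bool" where
  "uconnected E \<longleftrightarrow> (\<forall>u\<in>\<Union>E. \<forall>v\<in>\<Union>E. (u, v) \<in> (uadj E)\<^sup>*)"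

definition uforest :: "'v set set \<Rightarrow> bool" where
  "uforest E \<longleftrightarrow> \<not> (\<exists>C \<subseteq> E. is_ucycle C)"

definition is_utree :: "'v set set \<Rightarrow> bool" where
  "is_utree E \<longleftrightarrow> E \<noteq> {} \<and> uconnected E \<and> uforest E"

type_synonym ('v, 'c) cgraph = "('v set \<times> 'c) set"

definition cgraph :: "('v, 'c) cgraph \<Rightarrow> bool" where
  "cgraph G \<longleftrightarrow> finite G \<and> (\<forall>p\<in>G. card (fst p) = 2)
      \<and> (\<forall>p\<in>G. \<forall>q\<in>G. fst p = fst q \<longrightarrow> p = q)"

definition verts :: "('v, 'c) cgraph \<Rightarrow> 'v set" where
  "verts G = \<Union> (fst ` G)"

definition colors :: "('v, 'c) cgraph \<Rightarrow> 'c set" where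
  "colors G = snd ` G"

definition rainbow :: "('v, 'c) cgraph \<Rightarrow> bool" where
  "rainbow G \<longleftrightarrow> card (colors G) = card G"

definition almost_rainbow :: "('v, 'c) cgraph \<Rightarrow> bool" where
  "almost_rainbow G \<longleftrightarrow> card (colors G) + 1 = card G"

definition cpath :: "('v, 'c) cgraph \<Rightarrow> 'v \<Rightarrow> 'v \<Rightarrow> bool" where
  "cpath G s t \<longleftrightarrow> cgraph G \<and> is_upath (fst ` G) s t"

definition ccycle :: "('v, 'c) cgraph \<Rightarrow> bool" where
  "ccycle G \<longleftrightarrow> cgraph G \<and> is_ucycle (fst ` G)"

definition ctree :: "('v, 'c) cgraph \<Rightarrow> bool" where
  "ctree G \<longleftrightarrow> cgraph G \<and> is_utree (fst ` G)"

text \<open>Length of paths/cycles = number of edges = card G.\<close>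
definition long_rainbow_odd_cycle :: "('v, 'c) cgraph \<Rightarrow> bool" where
  "long_rainbow_odd_cycle G \<longleftrightarrow> ccycle G \<and> rainbow G \<and> odd (card G) \<and> card G \<ge> 7"

definition rainbow_tree :: "('v, 'c) cgraph \<Rightarrow> bool" where
  "rainbow_tree G \<longleftrightarrow> ctree G \<and> rainbow G"

definition theta_paths ::
  "('v, 'c) cgraph \<Rightarrow> ('v, 'c) cgraph \<Rightarrow> ('v, 'c) cgraph \<Rightarrow> 'v \<Rightarrow> 'v \<Rightarrow> bool" where
  "theta_paths P1 P2 P3 s t \<longleftrightarrow> s \<noteq> t \<and> cpath P1 s t \<and> cpath P2 s t \<and> cpath P3 s t
     \<and> verts P1 \<inter> verts P2 \<subseteq> {s, t} \<and> verts P1 \<inter> verts P3 \<subseteq> {s, t}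
     \<and> verts P2 \<inter> verts P3 \<subseteq> {s, t}
     \<and> fst ` P1 \<inter> fst ` P2 = {} \<and> fst ` P1 \<inter> fst ` P3 = {} \<and> fst ` P2 \<inter> fst ` P3 = {}"

definition theta_graph :: "('v, 'c) cgraph \<Rightarrow> bool" where
  "theta_graph G \<longleftrightarrow> cgraph G \<and>
     (\<exists>P1 P2 P3 s t. theta_paths P1 P2 P3 s t \<and> G = P1 \<union> P2 \<union> P3)"

definition bad_piece :: "('v, 'c) cgraph \<Rightarrow> bool" where
  "bad_piece G \<longleftrightarrow> theta_graph G \<and> almost_rainbow G \<and> card (verts G) \<ge> 6 \<and>
     (\<exists>P1 P2 P3 s t. theta_paths P1 P2 P3 s t \<and> rainbow P1 \<and> rainbow P2 \<and> rainbow P3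
        \<and> G = P1 \<union> P2 \<union> P3)"

definition is_partition :: "('v, 'c) cgraph \<Rightarrow> ('v, 'c) cgraph set \<Rightarrow> bool" where
  "is_partition F Ps \<longleftrightarrow> finite Ps \<and> (\<forall>G\<in>Ps. cgraph G) \<and> F = \<Union> Ps \<and>
     (\<forall>Gi\<in>Ps. \<forall>Gj\<in>Ps. Gi \<noteq> Gj \<longrightarrow>
        card (verts Gi \<inter> verts Gj) \<le> 1 \<and> colors Gi \<inter> colors Gj = {})"

definition frankenstein :: "('v, 'c) cgraph \<Rightarrow> ('v, 'c) cgraph set \<Rightarrow> bool" where
  "frankenstein F Ps \<longleftrightarrow> cgraph F \<and> is_partition F Ps \<and> Ps \<noteq> {} \<and>
     (\<forall>G\<in>Ps. long_rainbow_odd_cycle G \<or> bad_piece G \<or> rainbow_tree G) \<and>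
     (\<forall>Tp\<in>Ps. \<forall>Tq\<in>Ps. Tp \<noteq> Tq \<and> rainbow_tree Tp \<and> rainbow_tree Tq
        \<longrightarrow> verts Tp \<inter> verts Tq = {}) \<and>
     \<not> (\<exists>C \<subseteq> F. ccycle C \<and> rainbow C \<and> even (card C))"

definition shared_verts :: "('v, 'c) cgraph set \<Rightarrow> 'v set" where
  "shared_verts Ps = {v. \<exists>Gi\<in>Ps. \<exists>Gj\<in>Ps. Gi \<noteq> Gj \<and> v \<in> verts Gi \<and> v \<in> verts Gj}"

definition aux_graph :: "('v, 'c) cgraph set \<Rightarrow> (('v, 'c) cgraph + 'v) set set" where
  "aux_graph Ps = {{Inl G, Inr v} | G v. G \<in> Ps \<and> v \<in> shared_verts Ps \<and> v \<in> verts G}"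

end

theory Submission
  imports Defs
begin

lemma ue_Nil[simp]: "upath_edges [] = {}"
  by (simp add: upath_edges_def)
lemma ue_single[simp]: "upath_edges [x] = {}"
  by (simp add: upath_edges_def)
lemma ue_Cons2[simp]: "upath_edges (x # y # xs) = insert {x,y} (upath_edges (y # xs))"
  unfolding upath_edges_def
proof (rule set_eqI, rule iffI)
  fix e assume "e \<in> {{(x # y # xs) ! i, (x # y # xs) ! Suc i} |i. Suc i < length (x # y # xs)}"
  then obtain i where i: "e = {(x # y # xs) ! i, (x # y # xs) ! Suc i}" "Suc i < length (x # y # xs)" by blast
  show "e \<in> insert {x, y} {{(y # xs) ! i, (y # xs) ! Suc i} |i. Suc i < length (y # xs)}"
  proof (cases i)
    case 0 then show ?thesis using i by simp
  next
    case (Suc j) then show ?thesis using i by auto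
  qed
next
  fix e assume "e \<in> insert {x, y} {{(y # xs) ! i, (y # xs) ! Suc i} |i. Suc i < length (y # xs)}"
  then show "e \<in> {{(x # y # xs) ! i, (x # y # xs) ! Suc i} |i. Suc i < length (x # y # xs)}"
  proof
    assume "e = {x,y}" then show ?thesis by (intro CollectI exI[of _ 0]) auto
  next
    assume "e \<in> {{(y # xs) ! i, (y # xs) ! Suc i} |i. Suc i < length (y # xs)}"
    then obtain i where "e = {(y # xs) ! i, (y # xs) ! Suc i}" "Suc i < length (y # xs)" by blast
    then show ?thesis by (intro CollectI exI[of _ "Suc i"]) auto
  qed
qed

lemma ue_Cons: "xs \<noteq> [] \<Longrightarrow> upath_edges (x # xs) = insert {x, hd xs} (upath_edges xs)"
  by (cases xs) auto

lemma ue_append: "xs \<noteq> [] \<Longrightarrow> ys \<noteq> [] \<Longrightarrow>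
  upath_edges (xs @ ys) = upath_edges xs \<union> upath_edges ys \<union> {{last xs, hd ys}}"
proof (induction xs)
  case Nil then show ?case by simp
next
  case (Cons a xs)
  show ?case
  proof (cases "xs = []")
    case True then show ?thesis using Cons by (simp add: ue_Cons)
  next
    case False then show ?thesis using Cons by (auto simp: ue_Cons)
  qed
qed

lemma ue_glue: "xs \<noteq> [] \<Longrightarrow> ys \<noteq> [] \<Longrightarrow> last xs = hd ys \<Longrightarrow>
  upath_edges (xs @ tl ys) = upath_edges xs \<union> upath_edges ys"
proof (cases "tl ys = []")
  case True
  assume "ys \<noteq> []" 
  then obtain y where "ys = [y]" using True by (cases ys) auto
  then show ?thesis by simp
next
  case False
  assume a: "xs \<noteq> []" "ys \<noteq> []" "last xs = hd ys"
  then have "ys = hd ys # tl ys" by simp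
  then have "upath_edges ys = insert {hd ys, hd (tl ys)} (upath_edges (tl ys))"
    using False by (metis ue_Cons)
  then show ?thesis using ue_append[OF a(1) False] a by auto
qed

lemma ue_rev[simp]: "upath_edges (rev xs) = upath_edges xs"
proof (induction xs)
  case Nil then show ?case by simp
next
  case (Cons a xs)
  show ?case
  proof (cases "xs = []")
    case True then show ?thesis by simp
  next
    case False
    then have "upath_edges (rev xs @ [a]) = upath_edges (rev xs) \<union> {{last (rev xs), a}}"
      using ue_append[of "rev xs" "[a]"] by simp
    then show ?thesis using Cons False by (auto simp: ue_Cons last_rev insert_commute)
  qed
qed

lemma ue_union: "2 \<le> length xs \<Longrightarrow> \<Union> (upath_edges xs) = set xs"
proof (induction xs)
  case Nil then show ?case by simp
next
  case (Cons a xs)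
  then obtain y ys where xs: "xs = y # ys" by (cases xs) auto
  show ?case
  proof (cases ys)
    case Nil then show ?thesis using xs by simp
  next
    case (Cons z zs) then show ?thesis using xs Cons.IH by auto
  qed
qed

lemma ue_sub: "e \<in> upath_edges xs \<Longrightarrow> e \<subseteq> set xs"
  unfolding upath_edges_def by auto

lemma ue_two: "distinct xs \<Longrightarrow> e \<in> upath_edges xs \<Longrightarrow> \<exists>a b. a \<noteq> b \<and> e = {a,b}"
proof -
  assume d: "distinct xs" and "e \<in> upath_edges xs"
  then obtain i where i: "e = {xs!i, xs!Suc i}" "Suc i < length xs" unfolding upath_edges_def by blast
  have "xs!i \<noteq> xs!Suc i" using d i(2) by (simp add: nth_eq_iff_index_eq)
  then show ?thesis using i by blast
qed

lemma ue_disj: "distinct xs \<Longrightarrow> set xs \<inter> set ys \<subseteq> {z} \<Longrightarrow> upath_edges xs \<inter> upath_edges ys = {}"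
proof (rule ccontr)
  assume a: "distinct xs" "set xs \<inter> set ys \<subseteq> {z}" "upath_edges xs \<inter> upath_edges ys \<noteq> {}"
  then obtain e where e: "e \<in> upath_edges xs" "e \<in> upath_edges ys" by blast
  obtain u w where uw: "u \<noteq> w" "e = {u,w}" using ue_two[OF a(1) e(1)] by blast
  have "u \<in> set xs \<inter> set ys" "w \<in> set xs \<inter> set ys" using ue_sub[OF e(1)] ue_sub[OF e(2)] uw by auto
  then show False using a(2) uw(1) by blast
qed

lemma ue_take: "upath_edges (take n xs) \<subseteq> upath_edges xs"
proof (cases "take n xs = [] \<or> drop n xs = []")
  case True
  then show ?thesis
  proof
    assume "take n xs = []" then show ?thesis by (metis empty_subsetI ue_Nil)
  next
    assume "drop n xs = []" then have "take n xs = xs" by simp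
    then show ?thesis by simp
  qed
next
  case False
  then have "upath_edges (take n xs @ drop n xs) = upath_edges (take n xs) \<union> upath_edges (drop n xs) \<union> {{last (take n xs), hd (drop n xs)}}"
    using ue_append by blast
  then show ?thesis by auto
qed

lemma ue_drop: "upath_edges (drop n xs) \<subseteq> upath_edges xs"
proof (cases "take n xs = [] \<or> drop n xs = []")
  case True
  then show ?thesis
  proof
    assume "take n xs = []" then have "drop n xs = xs" by (metis append_Nil append_take_drop_id)
    then show ?thesis by simp
  next
    assume "drop n xs = []" then show ?thesis by simp
  qed
next
  case False
  then have "upath_edges (take n xs @ drop n xs) = upath_edges (take n xs) \<union> upath_edges (drop n xs) \<union> {{last (take n xs), hd (drop n xs)}}"
    using ue_append by blast
  then show ?thesis by auto
qed

lemma finite_ue[simp]: "finite (upath_edges xs)"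
proof -
  have "upath_edges xs = (\<lambda>i. {xs!i, xs!Suc i}) ` {i. Suc i < length xs}"
    by (auto simp: upath_edges_def)
  then show ?thesis by (simp add: finite_Collect_less_nat[of "length xs - 1", simplified less_diff_conv, simplified])
qed

lemma card_ue: "distinct xs \<Longrightarrow> card (upath_edges xs) = length xs - 1"
proof (induction xs)
  case Nil then show ?case by simp
next
  case (Cons a xs)
  show ?case
  proof (cases xs)
    case Nil then show ?thesis by simp
  next
    case (Cons y ys)
    have fin: "finite (upath_edges xs)" by simp
    have "{a,y} \<notin> upath_edges xs" using ue_sub[of "{a,y}" xs] Cons.prems by auto
    then show ?thesis using Cons Cons.IH Cons.prems fin by simp
  qed
qed


definition lpath :: "'v list \<Rightarrow> 'v \<Rightarrow> 'v \<Rightarrow> bool" where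
  "lpath p x y \<longleftrightarrow> distinct p \<and> 2 \<le> length p \<and> hd p = x \<and> last p = y"

lemma lpath_rev: "lpath p x y \<Longrightarrow> lpath (rev p) y x"
  unfolding lpath_def by (auto simp: hd_rev last_rev)

lemma lpath_cons: "lpath p x y \<Longrightarrow> \<exists>q. p = x # q \<and> q \<noteq> [] \<and> x \<notin> set q \<and> last q = y \<and> distinct q"
proof -
  assume a: "lpath p x y"
  then obtain z q where p: "p = z # q" "q \<noteq> []" unfolding lpath_def by (cases p) (auto simp: Suc_le_length_iff)
  then show ?thesis using a unfolding lpath_def by auto
qed

lemma lpath_ne: "lpath p x y \<Longrightarrow> x \<noteq> y"
  using lpath_cons by fastforce

lemma lpath_set: "lpath p x y \<Longrightarrow> x \<in> set p \<and> y \<in> set p"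
  using lpath_cons by fastforce

lemma lpath_glue:
  assumes "lpath p x y" "lpath q y z" "set p \<inter> set q \<subseteq> {y}" "x \<noteq> z"
  shows "lpath (p @ tl q) x z" "upath_edges (p @ tl q) = upath_edges p \<union> upath_edges q"
    "length (p @ tl q) + 1 = length p + length q" "set (p @ tl q) = set p \<union> set q"
proof -
  obtain p' where p': "p = x # p'" "p' \<noteq> []" "last p' = y" using lpath_cons[OF assms(1)] by blast
  obtain q' where q': "q = y # q'" "q' \<noteq> []" "y \<notin> set q'" "last q' = z" "distinct q'"
    using lpath_cons[OF assms(2)] by blast
  have lp: "last p = y" using p' by simp
  have yp: "y \<in> set p" using lpath_set[OF assms(1)] by blast
  show "upath_edges (p @ tl q) = upath_edges p \<union> upath_edges q"
    using ue_glue[of p q] p' q' lp by simp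
  show "length (p @ tl q) + 1 = length p + length q" using q' by simp
  show "set (p @ tl q) = set p \<union> set q" using q' yp by auto
  have "set p \<inter> set q' = {}" using assms(3) q' by auto
  then have "distinct (p @ tl q)" using assms(1) q' unfolding lpath_def by simp
  moreover have "hd (p @ tl q) = x" using p' by simp
  moreover have "last (p @ tl q) = z" using q' by simp
  moreover have "2 \<le> length (p @ tl q)" using assms(1) unfolding lpath_def by simp
  ultimately show "lpath (p @ tl q) x z" unfolding lpath_def by blast
qed

definition cyc :: "'v list \<Rightarrow> 'v set set" where
  "cyc cs = upath_edges (cs @ [hd cs])"

lemma cyc_eq: "cs \<noteq> [] \<Longrightarrow> cyc cs = upath_edges cs \<union> {{last cs, hd cs}}"
  unfolding cyc_def using ue_append[of cs "[hd cs]"] by simp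

lemma cyc_index: "cs \<noteq> [] \<Longrightarrow>
  {{cs ! i, cs ! ((Suc i) mod length cs)} | i. i < length cs} = cyc cs"
proof -
  assume ne: "cs \<noteq> []"
  let ?n = "length cs"
  have a: "(cs @ [hd cs]) ! i = cs ! i" if "i < ?n" for i using that by (simp add: nth_append)
  have b: "(cs @ [hd cs]) ! Suc i = cs ! (Suc i mod ?n)" if "i < ?n" for i
  proof (cases "Suc i < ?n")
    case True then show ?thesis by (simp add: nth_append)
  next
    case False then have "Suc i = ?n" using that by simp
    then show ?thesis using ne by (simp add: nth_append hd_conv_nth)
  qed
  show ?thesis unfolding cyc_def upath_edges_def
  proof (rule set_eqI, rule iffI)
    fix e assume "e \<in> {{cs ! i, cs ! (Suc i mod length cs)} |i. i < length cs}"
    then obtain i where "e = {cs ! i, cs ! (Suc i mod length cs)}" "i < ?n" by blast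
    then show "e \<in> {{(cs @ [hd cs]) ! i, (cs @ [hd cs]) ! Suc i} |i. Suc i < length (cs @ [hd cs])}"
      using a b by (intro CollectI exI[of _ i]) auto
  next
    fix e assume "e \<in> {{(cs @ [hd cs]) ! i, (cs @ [hd cs]) ! Suc i} |i. Suc i < length (cs @ [hd cs])}"
    then obtain i where "e = {(cs @ [hd cs]) ! i, (cs @ [hd cs]) ! Suc i}" "i < ?n" by auto
    then show "e \<in> {{cs ! i, cs ! (Suc i mod length cs)} |i. i < length cs}"
      using a b by (intro CollectI exI[of _ i]) auto
  qed
qed

lemma ucycle_cyc: "distinct cs \<Longrightarrow> 3 \<le> length cs \<Longrightarrow> is_ucycle (cyc cs)"
proof -
  assume "distinct cs" "3 \<le> length cs"
  moreover then have "cs \<noteq> []" by auto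
  ultimately show ?thesis unfolding is_ucycle_def using cyc_index[of cs] by blast
qed

lemma ucycle_obtain: "is_ucycle E \<Longrightarrow> \<exists>cs. distinct cs \<and> 3 \<le> length cs \<and> E = cyc cs"
proof -
  assume "is_ucycle E"
  then obtain cs where "distinct cs" "3 \<le> length cs" "E = {{cs ! i, cs ! ((Suc i) mod length cs)} | i. i < length cs}"
    unfolding is_ucycle_def by blast
  moreover then have "cs \<noteq> []" by auto
  ultimately show ?thesis using cyc_index[of cs] by auto
qed

lemma card_cyc: "distinct cs \<Longrightarrow> 3 \<le> length cs \<Longrightarrow> card (cyc cs) = length cs"
proof -
  assume d: "distinct cs" and l: "3 \<le> length cs"
  obtain x ys where cs0: "cs = x # ys" using l by (cases cs) auto
  obtain a zs where ys: "ys = a # zs" using l cs0 by (cases ys) auto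
  have cs: "cs = x # ys" "ys \<noteq> []" using cs0 ys by auto
  have zs: "zs \<noteq> []" using l cs ys by auto
  have nin: "{last cs, hd cs} \<notin> upath_edges cs"
  proof
    assume "{last cs, hd cs} \<in> upath_edges cs"
    then have h: "{last ys, x} \<in> insert {x, hd ys} (upath_edges ys)" using cs ue_Cons[of ys x] by simp
    have xl: "x \<noteq> last ys" using d cs by (metis distinct.simps(2) last_in_set)
    show False
    proof (cases "{last ys, x} = {x, hd ys}")
      case True
      then have "last ys = hd ys" using xl by (simp add: doubleton_eq_iff)
      then have "last zs = a" using ys zs by simp
      then show False using d cs ys zs by (metis distinct.simps(2) last_in_set)
    next
      case False
      then have "{last ys, x} \<in> upath_edges ys" using h by simp
      then have "x \<in> set ys" using ue_sub by blast
      then show False using d cs by simp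
    qed
  qed
  have "cyc cs = insert {last cs, hd cs} (upath_edges cs)"
    using cyc_eq[of cs] cs by auto
  then have "card (cyc cs) = card (upath_edges cs) + 1"
    using nin by simp
  then show ?thesis using card_ue[OF d] l by simp
qed

lemma closed_walk:
  assumes "lpath p x y" "lpath q y x" "set p \<inter> set q \<subseteq> {x,y}" "cs = p @ butlast (tl q)"
  shows "distinct cs" "length cs + 2 = length p + length q" "cyc cs = upath_edges p \<union> upath_edges q"
    "set cs = set p \<union> set q"
proof -
  obtain p' where p': "p = x # p'" "p' \<noteq> []" "last p' = y" using lpath_cons[OF assms(1)] by blast
  obtain q' where q': "q = y # q'" "q' \<noteq> []" "y \<notin> set q'" "last q' = x" "distinct q'"
    using lpath_cons[OF assms(2)] by blast
  have lq: "q' = butlast q' @ [x]" using q' by (metis append_butlast_last_id)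
  have xn: "x \<notin> set (butlast q')" using q'(5) lq by (metis distinct_append disjoint_iff list.set_intros(1))
  have yn: "y \<notin> set (butlast q')" using q'(3) lq by (metis in_set_butlastD)
  have "set p \<inter> set (butlast q') = {}"
  proof -
    have "set (butlast q') \<subseteq> set q" using q' by (auto dest: in_set_butlastD)
    then show ?thesis using assms(3) xn yn by blast
  qed
  moreover have "distinct (butlast q')" using q'(5) by (simp add: distinct_butlast)
  ultimately show "distinct cs" using assms(1,4) q'(1) unfolding lpath_def by simp
  show "length cs + 2 = length p + length q" using assms(4) q' by simp
  have hc: "hd cs = x" using assms(4) p' by simp
  have "cs @ [hd cs] = p @ (butlast q' @ [x])" using assms(4) q'(1) hc by simp
  then have "cs @ [hd cs] = p @ tl q" using lq q'(1) by (metis list.sel(3))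
  then show "cyc cs = upath_edges p \<union> upath_edges q" unfolding cyc_def
    using ue_glue[of p q] p' q' by simp
  have "set q' = set (butlast q' @ [x])" by (rule arg_cong[OF lq])
  then have "set q' = insert x (set (butlast q'))" by simp
  then show "set cs = set p \<union> set q" using assms(4) q'(1) p' lpath_set[OF assms(1)] by auto
qed


lemma last_take_Suc: "b < length cs \<Longrightarrow> last (take (Suc b) cs) = cs ! b"
  by (simp add: take_Suc_conv_app_nth)

lemma arcs_ord:
  assumes d: "distinct cs" and ab: "a < b" "b < length cs"
  shows "\<exists>p1 p2. lpath p1 (cs!a) (cs!b) \<and> lpath p2 (cs!a) (cs!b) \<and> upath_edges p1 \<subseteq> cyc cs
     \<and> upath_edges p2 \<subseteq> cyc cs \<and> length p1 + length p2 = length cs + 2"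
proof -
  have ne: "cs \<noteq> []" using ab by auto
  have cyc: "cyc cs = upath_edges cs \<union> {{last cs, hd cs}}" using cyc_eq[OF ne] .
  define p1 where "p1 = drop a (take (Suc b) cs)"
  define D where "D = drop b cs"
  define T where "T = take (Suc a) cs"
  define p2 where "p2 = rev (D @ T)"
  have l1: "length p1 = Suc b - a" using ab unfolding p1_def by simp
  have "hd p1 = cs ! a" unfolding p1_def using ab by (simp add: hd_drop_conv_nth)
  moreover have "last p1 = cs ! b" unfolding p1_def using ab by (simp add: last_take_Suc)
  moreover have "distinct p1" unfolding p1_def using d by simp
  ultimately have P1: "lpath p1 (cs!a) (cs!b)" unfolding lpath_def using l1 ab by simp
  have E1: "upath_edges p1 \<subseteq> cyc cs" unfolding p1_def cyc
    using ue_drop[of a "take (Suc b) cs"] ue_take[of "Suc b" cs] by blast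
  have Dn: "D \<noteq> []" "hd D = cs ! b" "last D = last cs" unfolding D_def using ab by (auto simp: hd_drop_conv_nth)
  have Tn: "T \<noteq> []" "hd T = hd cs" "last T = cs ! a" unfolding T_def using ab ne by (auto simp: last_take_Suc)
  have "set T \<inter> set D = {}" unfolding T_def D_def using d ab by (simp add: set_take_disj_set_drop_if_distinct)
  then have "distinct (D @ T)" unfolding D_def T_def using d by (auto simp: Int_commute)
  moreover have "length p2 = length cs - b + Suc a" unfolding p2_def D_def T_def using ab by simp
  moreover have "hd p2 = cs ! a" unfolding p2_def using Tn by (simp add: hd_rev)
  moreover have "last p2 = cs ! b" unfolding p2_def using Dn by (simp add: last_rev)
  moreover have "2 \<le> length cs - b + Suc a" using ab by linarith
  ultimately have P2: "lpath p2 (cs!a) (cs!b)" unfolding lpath_def using ab by (simp add: p2_def Int_commute)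
  have "upath_edges p2 = upath_edges D \<union> upath_edges T \<union> {{last cs, hd cs}}"
    unfolding p2_def ue_rev using ue_append[OF Dn(1) Tn(1)] Dn Tn by simp
  then have E2: "upath_edges p2 \<subseteq> cyc cs" unfolding cyc D_def T_def
    using ue_drop[of b cs] ue_take[of "Suc a" cs] by blast
  have "length p1 + length p2 = length cs + 2" using l1 \<open>length p2 = length cs - b + Suc a\<close> ab by simp
  then show ?thesis using P1 P2 E1 E2 by blast
qed

lemma arcs:
  assumes d: "distinct cs" and xy: "x \<in> set cs" "y \<in> set cs" "x \<noteq> y"
  shows "\<exists>p1 p2. lpath p1 x y \<and> lpath p2 x y \<and> upath_edges p1 \<subseteq> cyc cs
     \<and> upath_edges p2 \<subseteq> cyc cs \<and> length p1 + length p2 = length cs + 2"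
proof -
  obtain a b where ab: "a < length cs" "b < length cs" "x = cs ! a" "y = cs ! b"
    using xy by (auto simp: in_set_conv_nth)
  have "a \<noteq> b" using ab xy by auto
  then consider "a < b" | "b < a" by linarith
  then show ?thesis
  proof cases
    case 1 then show ?thesis using arcs_ord[OF d 1 ab(2)] ab by simp
  next
    case 2
    then obtain p1 p2 where "lpath p1 y x" "lpath p2 y x" "upath_edges p1 \<subseteq> cyc cs"
     "upath_edges p2 \<subseteq> cyc cs" "length p1 + length p2 = length cs + 2"
      using arcs_ord[OF d 2 ab(1)] ab by auto
    then show ?thesis using lpath_rev by (metis length_rev ue_rev)
  qed
qed

lemma path_rtrancl:
  assumes "(x, y) \<in> (uadj E)\<^sup>*"
  shows "\<exists>p. distinct p \<and> p \<noteq> [] \<and> hd p = x \<and> last p = y \<and> upath_edges p \<subseteq> E"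
  using assms
proof (induction rule: rtrancl_induct)
  case base
  then show ?case by (intro exI[of _ "[x]"]) simp
next
  case (step y z)
  then obtain p where p: "distinct p" "p \<noteq> []" "hd p = x" "last p = y" "upath_edges p \<subseteq> E" by blast
  have yz: "{y, z} \<in> E" using step(2) unfolding uadj_def by simp
  show ?case
  proof (cases "z \<in> set p")
    case True
    then obtain i where i: "i < length p" "p ! i = z" by (auto simp: in_set_conv_nth)
    let ?q = "take (Suc i) p"
    have "distinct ?q" using p by simp
    moreover have "?q \<noteq> []" using i by (cases p) auto
    moreover have "hd ?q = x" using p by simp
    moreover have "last ?q = z" using i by (simp add: last_take_Suc)
    moreover have "upath_edges ?q \<subseteq> E" using ue_take p by blast
    ultimately show ?thesis by blast
  next
    case False
    have "distinct (p @ [z])" using p False by simp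
    moreover have "upath_edges (p @ [z]) \<subseteq> E" using ue_append[of p "[z]"] p yz by simp
    ultimately show ?thesis using p by (intro exI[of _ "p @ [z]"]) simp
  qed
qed

lemma path_rtrancl2:
  assumes "(x, y) \<in> (uadj E)\<^sup>*" "x \<noteq> y"
  shows "\<exists>p. lpath p x y \<and> upath_edges p \<subseteq> E"
proof -
  obtain p where p: "distinct p" "p \<noteq> []" "hd p = x" "last p = y" "upath_edges p \<subseteq> E"
    using path_rtrancl[OF assms(1)] by blast
  have "length p \<noteq> 1" using p assms(2) by (cases p) auto
  moreover have "length p \<noteq> 0" using p(2) by simp
  ultimately have "2 \<le> length p" by linarith
  then show ?thesis using p unfolding lpath_def by blast
qed


lemma theta_core:
  assumes pa: "lpath qa s t" and pb: "lpath qb s t" and pc: "lpath qc s t"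
    and sab: "set qa \<inter> set qb \<subseteq> {s,t}" and sac: "set qa \<inter> set qc \<subseteq> {s,t}"
    and sbc: "set qb \<inter> set qc \<subseteq> {s,t}"
    and eab: "upath_edges qa \<inter> upath_edges qb = {}" and eac: "upath_edges qa \<inter> upath_edges qc = {}"
    and obc: "odd (length qb + length qc)"
    and qa: "qa = xa1 @ x # xa2" and qb: "qb = yb1 @ y # yb2"
    and xst: "x \<noteq> s" "x \<noteq> t" and yst: "y \<noteq> s" "y \<noteq> t"
    and ea: "ea \<in> upath_edges (x # xa2)"
  shows "\<exists>p. lpath p x y \<and> upath_edges p \<subseteq> upath_edges qa \<union> upath_edges qb \<union> upath_edges qc
           \<and> ea \<notin> upath_edges p \<and> even (length p) = bb"
proof -
  have da: "distinct qa" and db: "distinct qb" and dc: "distinct qc"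
    using pa pb pc unfolding lpath_def by auto
  have xa1: "xa1 \<noteq> []" using pa qa xst unfolding lpath_def by (cases xa1) auto
  have hxa1: "hd xa1 = s" using pa qa xa1 unfolding lpath_def by simp
  have xa2: "xa2 \<noteq> []" using pa qa xst unfolding lpath_def by (cases xa2) auto
  have lxa2: "last xa2 = t" using pa qa xa2 unfolding lpath_def by simp
  have yb1: "yb1 \<noteq> []" using pb qb yst unfolding lpath_def by (cases yb1) auto
  have hyb1: "hd yb1 = s" using pb qb yb1 unfolding lpath_def by simp
  have yb2: "yb2 \<noteq> []" using pb qb yst unfolding lpath_def by (cases yb2) auto
  have lyb2: "last yb2 = t" using pb qb yb2 unfolding lpath_def by simp
  define A where "A = rev (xa1 @ [x])"
  define B1 where "B1 = yb1 @ [y]"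
  define B2 where "B2 = y # yb2"
  have dA: "distinct (xa1 @ [x])" "distinct (x # xa2)" using da qa by auto
  have dB: "distinct B1" "distinct B2" using db qb unfolding B1_def B2_def by auto
  have PA: "lpath A x s" unfolding A_def lpath_def using dA xa1 hxa1
    by (auto simp: hd_rev last_rev Suc_le_length_iff neq_Nil_conv)
  have PB1: "lpath B1 s y" unfolding B1_def lpath_def using dB yb1 hyb1
    by (auto simp: B1_def Suc_le_length_iff neq_Nil_conv)
  have PB2: "lpath B2 y t" unfolding B2_def lpath_def using dB yb2 lyb2
    by (auto simp: B2_def Suc_le_length_iff neq_Nil_conv)
  have tA: "t \<notin> set A"
  proof
    assume "t \<in> set A"
    then have "t \<in> set (xa1 @ [x])" unfolding A_def by simp
    moreover have "t \<in> set xa2" using lxa2 xa2 by auto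
    ultimately show False using da qa by auto
  qed
  have sB2: "s \<notin> set B2"
  proof
    assume "s \<in> set B2"
    moreover have "s \<in> set yb1" using hyb1 yb1 by auto
    ultimately show False using db qb unfolding B2_def by auto
  qed
  have setA: "set A \<subseteq> set qa" unfolding A_def qa by auto
  have setB1: "set B1 \<subseteq> set qb" unfolding B1_def qb by auto
  have setB2: "set B2 \<subseteq> set qb" unfolding B2_def qb by auto
  have uqa: "upath_edges qa = upath_edges (xa1 @ [x]) \<union> upath_edges (x # xa2)"
    using ue_glue[of "xa1 @ [x]" "x # xa2"] qa by simp
  have uqb: "upath_edges qb = upath_edges B1 \<union> upath_edges B2"
    using ue_glue[of B1 B2] qb unfolding B1_def B2_def by simp
  have eaa: "ea \<notin> upath_edges A"
  proof -
    have "upath_edges (xa1 @ [x]) \<inter> upath_edges (x # xa2) = {}"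
    proof -
      have "set xa1 \<inter> set xa2 = {}" using da qa by auto
      then have "set (xa1 @ [x]) \<inter> set (x # xa2) \<subseteq> {x}" by auto
      then show ?thesis using ue_disj[OF dA(1)] by blast
    qed
    then show ?thesis using ea unfolding A_def ue_rev by blast
  qed
  have eaq: "ea \<in> upath_edges qa" using uqa ea by auto
  have xy: "x \<noteq> y"
  proof
    assume "x = y"
    then have "x \<in> set qa \<inter> set qb" using qa qb by auto
    then show False using sab xst by auto
  qed
  have i1: "set A \<inter> set B1 \<subseteq> {s}" using setA setB1 sab tA by auto
  note G1 = lpath_glue[OF PA PB1 i1 xy]
  define p1 where "p1 = A @ tl B1"
  have xt: "x \<noteq> t" using xst by simp
  have i2: "set A \<inter> set qc \<subseteq> {s}" using setA sac tA by auto
  note G2 = lpath_glue[OF PA pc i2 xt]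
  have PB2r: "lpath (rev B2) t y" using lpath_rev[OF PB2] .
  have i3: "set (A @ tl qc) \<inter> set (rev B2) \<subseteq> {t}"
    using G2(4) setA setB2 sab sbc tA sB2 by auto
  note G3 = lpath_glue[OF G2(1) PB2r i3 xy]
  define p2 where "p2 = (A @ tl qc) @ tl (rev B2)"
  have l12: "length B1 + length B2 = length qb + 1" unfolding B1_def B2_def qb by simp
  have par: "even (length p1) \<noteq> even (length p2)"
  proof -
    have e1: "length p1 + 1 = length A + length B1" using G1(3) unfolding p1_def .
    have e2: "length p2 + 1 = length (A @ tl qc) + length (rev B2)" using G3(3) unfolding p2_def .
    have e3: "length (A @ tl qc) + 1 = length A + length qc" using G2(3) .
    have "length (rev B2) = length B2" by simp
    then show ?thesis using e1 e2 e3 l12 obc by presburger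
  qed
  have E1: "upath_edges p1 \<subseteq> upath_edges qa \<union> upath_edges qb \<union> upath_edges qc \<and> ea \<notin> upath_edges p1"
  proof -
    have "upath_edges p1 = upath_edges A \<union> upath_edges B1" using G1(2) unfolding p1_def .
    moreover have "upath_edges A \<subseteq> upath_edges qa" using uqa unfolding A_def ue_rev by blast
    moreover have "ea \<notin> upath_edges B1" using eaq eab uqb by auto
    ultimately show ?thesis using uqb eaa by auto
  qed
  have E2: "upath_edges p2 \<subseteq> upath_edges qa \<union> upath_edges qb \<union> upath_edges qc \<and> ea \<notin> upath_edges p2"
  proof -
    have "upath_edges p2 = upath_edges A \<union> upath_edges qc \<union> upath_edges B2" using G3(2) G2(2) unfolding p2_def by simp
    moreover have "upath_edges A \<subseteq> upath_edges qa" using uqa unfolding A_def ue_rev by blast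
    moreover have "ea \<notin> upath_edges B2" using eaq eab uqb by auto
    moreover have "ea \<notin> upath_edges qc" using eaq eac by auto
    ultimately show ?thesis using uqb eaa by auto
  qed
  show ?thesis
  proof (cases "even (length p1) = bb")
    case True then show ?thesis using G1(1) E1 unfolding p1_def by blast
  next
    case False then have "even (length p2) = bb" using par by blast
    then show ?thesis using G3(1) E2 unfolding p2_def by blast
  qed
qed

lemma core3:
  assumes pa: "lpath qa s t" and pb: "lpath qb s t" and pc: "lpath qc s t"
    and sab: "set qa \<inter> set qb \<subseteq> {s,t}" and sac: "set qa \<inter> set qc \<subseteq> {s,t}"
    and sbc: "set qb \<inter> set qc \<subseteq> {s,t}"
    and eab: "upath_edges qa \<inter> upath_edges qb = {}" and eac: "upath_edges qa \<inter> upath_edges qc = {}"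
    and obc: "odd (length qb + length qc)"
    and ea: "ea \<in> upath_edges qa"
    and x: "x \<in> set qa" "x \<notin> set qc" and y: "y \<in> set qb" "y \<notin> set qc"
  shows "\<exists>p. lpath p x y \<and> upath_edges p \<subseteq> upath_edges qa \<union> upath_edges qb \<union> upath_edges qc
           \<and> ea \<notin> upath_edges p \<and> even (length p) = bb"
proof -
  have st: "s \<in> set qc" "t \<in> set qc" using lpath_set[OF pc] by auto
  have xst: "x \<noteq> s" "x \<noteq> t" and yst: "y \<noteq> s" "y \<noteq> t" using st x y by auto
  obtain xa1 xa2 where qa: "qa = xa1 @ x # xa2" using x(1) by (meson split_list)
  obtain yb1 yb2 where qb: "qb = yb1 @ y # yb2" using y(1) by (meson split_list)
  have uqa: "upath_edges qa = upath_edges (xa1 @ [x]) \<union> upath_edges (x # xa2)"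
    using ue_glue[of "xa1 @ [x]" "x # xa2"] qa by simp
  show ?thesis
  proof (cases "ea \<in> upath_edges (x # xa2)")
    case True
    show ?thesis by (rule theta_core[OF pa pb pc sab sac sbc eab eac obc qa qb xst yst True])
  next
    case False
    have "ea \<in> upath_edges (xa1 @ [x])" using ea uqa False by blast
    then have "ea \<in> upath_edges (rev (xa1 @ [x]))" by (simp only: ue_rev)
    then have ea': "ea \<in> upath_edges (x # rev xa1)" by simp
    have r: "lpath (rev qa) t s" "lpath (rev qb) t s" "lpath (rev qc) t s"
      using lpath_rev[OF pa] lpath_rev[OF pb] lpath_rev[OF pc] by this+
    have s2: "set (rev qa) \<inter> set (rev qb) \<subseteq> {t,s}" "set (rev qa) \<inter> set (rev qc) \<subseteq> {t,s}"
      "set (rev qb) \<inter> set (rev qc) \<subseteq> {t,s}" using sab sac sbc by (simp_all add: insert_commute)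
    have e2: "upath_edges (rev qa) \<inter> upath_edges (rev qb) = {}" "upath_edges (rev qa) \<inter> upath_edges (rev qc) = {}"
      using eab eac by simp_all
    have o2: "odd (length (rev qb) + length (rev qc))" using obc by simp
    have qa2: "rev qa = rev xa2 @ x # rev xa1" using qa by simp
    have qb2: "rev qb = rev yb2 @ y # rev yb1" using qb by simp
    obtain p where p: "lpath p x y" "upath_edges p \<subseteq> upath_edges (rev qa) \<union> upath_edges (rev qb) \<union> upath_edges (rev qc)"
           "ea \<notin> upath_edges p" "even (length p) = bb"
      using theta_core[OF r s2 e2 o2 qa2 qb2 xst(2,1) yst(2,1) ea'] by blast
    have "upath_edges p \<subseteq> upath_edges qa \<union> upath_edges qb \<union> upath_edges qc" using p(2) by (simp only: ue_rev)
    then show ?thesis using p(1,3,4) by blast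
  qed
qed

lemma theta_all:
  assumes pa: "lpath qa s t" and pb: "lpath qb s t" and pc: "lpath qc s t"
    and sab: "set qa \<inter> set qb \<subseteq> {s,t}" and sac: "set qa \<inter> set qc \<subseteq> {s,t}"
    and sbc: "set qb \<inter> set qc \<subseteq> {s,t}"
    and eab: "upath_edges qa \<inter> upath_edges qb = {}" and eac: "upath_edges qa \<inter> upath_edges qc = {}"
    and ebc: "upath_edges qb \<inter> upath_edges qc = {}"
    and oac: "odd (length qa + length qc)" and obc: "odd (length qb + length qc)"
    and ea: "ea \<in> upath_edges qa" and eb: "eb \<in> upath_edges qb"
    and x: "x \<in> set qa \<union> set qb \<union> set qc" and y: "y \<in> set qa \<union> set qb \<union> set qc"
    and xy: "x \<noteq> y"
  shows "\<exists>p. lpath p x y \<and> upath_edges p \<subseteq> upath_edges qa \<union> upath_edges qb \<union> upath_edges qc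
           \<and> (ea \<notin> upath_edges p \<or> eb \<notin> upath_edges p) \<and> even (length p) = bb"
proof -
  have cyc_case: "\<exists>p. lpath p x y \<and> upath_edges p \<subseteq> upath_edges q1 \<union> upath_edges qc \<and> even (length p) = bb"
    if p1: "lpath q1 s t" and s1: "set q1 \<inter> set qc \<subseteq> {s,t}" and e1: "upath_edges q1 \<inter> upath_edges qc = {}"
      and o1: "odd (length q1 + length qc)" and xy1: "x \<in> set q1 \<union> set qc" "y \<in> set q1 \<union> set qc" for q1
  proof -
    define cs where "cs = q1 @ butlast (tl (rev qc))"
    have rc: "lpath (rev qc) t s" using lpath_rev[OF pc] .
    have s1': "set q1 \<inter> set (rev qc) \<subseteq> {s,t}" using s1 by simp
    note CW = closed_walk[OF p1 rc s1' cs_def]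
    have "length cs \<ge> 3"
    proof (rule ccontr)
      assume "\<not> 3 \<le> length cs"
      then have l2: "length q1 = 2" "length qc = 2" using CW(2) p1 pc unfolding lpath_def by auto
      have two: "upath_edges q = {{s,t}}" if lq: "lpath q s t" "length q = 2" for q
      proof -
        obtain q' where q': "q = s # q'" "q' \<noteq> []" "last q' = t" using lpath_cons[OF lq(1)] by blast
        then have "length q' = 1" using lq(2) by simp
        then obtain z where "q' = [z]" by (cases q') auto
        then show ?thesis using q' by simp
      qed
      have "upath_edges q1 = {{s,t}}" "upath_edges qc = {{s,t}}" using two p1 pc l2 by auto
      then show False using e1 by auto
    qed
    obtain r1 r2 where r: "lpath r1 x y" "lpath r2 x y" "upath_edges r1 \<subseteq> cyc cs"
      "upath_edges r2 \<subseteq> cyc cs" "length r1 + length r2 = length cs + 2"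
      using arcs[OF CW(1) _ _ xy] xy1 CW(4) by auto
    have "length cs + 2 = length q1 + length qc" using CW(2) by simp
    then have par: "even (length r1) \<noteq> even (length r2)" using r(5) o1 by presburger
    have cc: "cyc cs = upath_edges q1 \<union> upath_edges qc" using CW(3) by simp
    show ?thesis
    proof (cases "even (length r1) = bb")
      case True then show ?thesis using r(1,3) cc by blast
    next
      case False then have "even (length r2) = bb" using par by blast
      then show ?thesis using r(2,4) cc by blast
    qed
  qed
  consider "x \<in> set qa \<union> set qc \<and> y \<in> set qa \<union> set qc" | "x \<in> set qb \<union> set qc \<and> y \<in> set qb \<union> set qc"
    | "x \<in> set qa \<and> x \<notin> set qc \<and> y \<in> set qb \<and> y \<notin> set qc"
    | "y \<in> set qa \<and> y \<notin> set qc \<and> x \<in> set qb \<and> x \<notin> set qc"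
    using x y by blast
  then show ?thesis
  proof cases
    case 1
    then obtain p where "lpath p x y" "upath_edges p \<subseteq> upath_edges qa \<union> upath_edges qc" "even (length p) = bb"
      using cyc_case[OF pa sac eac oac] by blast
    moreover have "eb \<notin> upath_edges p" using calculation(2) eb eab ebc by auto
    ultimately show ?thesis by blast
  next
    case 2
    then obtain p where "lpath p x y" "upath_edges p \<subseteq> upath_edges qb \<union> upath_edges qc" "even (length p) = bb"
      using cyc_case[OF pb sbc ebc obc] by blast
    moreover have "ea \<notin> upath_edges p" using calculation(2) ea eab eac by auto
    ultimately show ?thesis by blast
  next
    case 3
    then show ?thesis using core3[OF pa pb pc sab sac sbc eab eac obc ea] by blast
  next
    case 4
    then obtain p where "lpath p y x" "upath_edges p \<subseteq> upath_edges qa \<union> upath_edges qb \<union> upath_edges qc"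
           "ea \<notin> upath_edges p" "even (length p) = bb"
      using core3[OF pa pb pc sab sac sbc eab eac obc ea] by blast
    then show ?thesis using lpath_rev by (metis length_rev ue_rev)
  qed
qed


definition sub :: "('v, 'c) cgraph \<Rightarrow> 'v set set \<Rightarrow> ('v, 'c) cgraph" where
  "sub G E = {q \<in> G. fst q \<in> E}"

definition rp :: "('v, 'c) cgraph \<Rightarrow> 'v \<Rightarrow> 'v \<Rightarrow> 'v list \<Rightarrow> bool" where
  "rp G x y p \<longleftrightarrow> lpath p x y \<and> upath_edges p \<subseteq> fst ` G \<and> inj_on snd (sub G (upath_edges p))"

lemma rainbow_inj: "cgraph G \<Longrightarrow> rainbow G \<Longrightarrow> inj_on snd G"
  unfolding cgraph_def rainbow_def colors_def using inj_on_iff_eq_card by blast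

lemma cg_uniq: "cgraph G \<Longrightarrow> p \<in> G \<Longrightarrow> q \<in> G \<Longrightarrow> fst p = fst q \<Longrightarrow> p = q"
  unfolding cgraph_def by blast

lemma cg_inj_fst: "cgraph G \<Longrightarrow> inj_on fst G"
  unfolding inj_on_def using cg_uniq by blast

lemma cg_card_fst: "cgraph G \<Longrightarrow> card (fst ` G) = card G"
  using cg_inj_fst card_image by blast

lemma cg_finite_verts: "cgraph G \<Longrightarrow> finite (verts G)"
proof -
  assume c: "cgraph G"
  have "finite e" if ee: "e \<in> fst ` G" for e
  proof -
    have "card e = 2" using c ee unfolding cgraph_def by blast
    then show ?thesis by (intro card_ge_0_finite) simp
  qed
  moreover have "finite (fst ` G)" using c unfolding cgraph_def by simp
  ultimately show ?thesis unfolding verts_def by blast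
qed

lemma cg_subset: "cgraph G \<Longrightarrow> H \<subseteq> G \<Longrightarrow> cgraph H"
proof -
  assume c: "cgraph G" and h: "H \<subseteq> G"
  then have "finite H" unfolding cgraph_def using finite_subset by blast
  then show ?thesis using c h unfolding cgraph_def by blast
qed

lemma upath_lpath: "is_upath E s t \<Longrightarrow> \<exists>q. lpath q s t \<and> E = upath_edges q"
  unfolding is_upath_def lpath_def by blast

lemma verts_ue: "2 \<le> length q \<Longrightarrow> fst ` G = upath_edges q \<Longrightarrow> verts G = set q"
  unfolding verts_def using ue_union[of q] by simp

lemma union_cyc: "3 \<le> length cs \<Longrightarrow> \<Union> (cyc cs) = set cs"
proof -
  assume l: "3 \<le> length cs"
  then have "\<Union> (cyc cs) = set (cs @ [hd cs])" unfolding cyc_def by (intro ue_union) simp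
  moreover have "hd cs \<in> set cs" using l by (cases cs) auto
  ultimately show ?thesis by auto
qed

locale fr =
  fixes F :: "('v, 'c) cgraph" and Ps :: "('v, 'c) cgraph set"
  assumes fk: "frankenstein F Ps"
begin

lemmas fkd = fk[unfolded frankenstein_def]

lemma cgF: "cgraph F" using fkd by (rule conjunct1)

lemma ptn: "is_partition F Ps" using fkd by (elim conjE)

lemmas ptnd = ptn[unfolded is_partition_def]

lemma partF: "G \<in> Ps \<Longrightarrow> G \<subseteq> F"
proof -
  assume "G \<in> Ps"
  moreover have "F = \<Union> Ps" using ptnd by (elim conjE)
  ultimately show ?thesis by blast
qed

lemma part_cg: "G \<in> Ps \<Longrightarrow> cgraph G"
proof -
  assume "G \<in> Ps"
  moreover have "\<forall>G\<in>Ps. cgraph G" using ptnd by (elim conjE)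
  ultimately show ?thesis by blast
qed

lemma types: "G \<in> Ps \<Longrightarrow> long_rainbow_odd_cycle G \<or> bad_piece G \<or> rainbow_tree G"
proof -
  assume "G \<in> Ps"
  moreover have "\<forall>G\<in>Ps. long_rainbow_odd_cycle G \<or> bad_piece G \<or> rainbow_tree G" using fkd by (elim conjE)
  ultimately show ?thesis by blast
qed

lemma ptn2: "G1 \<in> Ps \<Longrightarrow> G2 \<in> Ps \<Longrightarrow> G1 \<noteq> G2 \<Longrightarrow>
        card (verts G1 \<inter> verts G2) \<le> 1 \<and> colors G1 \<inter> colors G2 = {}"
proof -
  assume a: "G1 \<in> Ps" "G2 \<in> Ps" "G1 \<noteq> G2"
  have "\<forall>Gi\<in>Ps. \<forall>Gj\<in>Ps. Gi \<noteq> Gj \<longrightarrow>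
        card (verts Gi \<inter> verts Gj) \<le> 1 \<and> colors Gi \<inter> colors Gj = {}" using ptnd by (elim conjE)
  then show ?thesis using a by blast
qed

lemma share1:
  assumes "G1 \<in> Ps" "G2 \<in> Ps" "G1 \<noteq> G2" "a \<in> verts G1" "a \<in> verts G2" "b \<in> verts G1" "b \<in> verts G2"
  shows "a = b"
proof -
  have "card (verts G1 \<inter> verts G2) \<le> Suc 0"
    using ptn2[OF assms(1-3)] by simp
  moreover have "finite (verts G1 \<inter> verts G2)" using cg_finite_verts part_cg assms(1) by blast
  ultimately have "\<forall>a1 \<in> verts G1 \<inter> verts G2. \<forall>a2 \<in> verts G1 \<inter> verts G2. a1 = a2"
    using card_le_Suc0_iff_eq by blast
  then show ?thesis using assms(4-7) by blast
qed

lemma coldisj: "G1 \<in> Ps \<Longrightarrow> G2 \<in> Ps \<Longrightarrow> G1 \<noteq> G2 \<Longrightarrow> colors G1 \<inter> colors G2 = {}"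
  using ptn2 by blast

lemma treedisj: "G1 \<in> Ps \<Longrightarrow> G2 \<in> Ps \<Longrightarrow> G1 \<noteq> G2 \<Longrightarrow> rainbow_tree G1 \<Longrightarrow> rainbow_tree G2
   \<Longrightarrow> verts G1 \<inter> verts G2 = {}"
proof -
  assume a: "G1 \<in> Ps" "G2 \<in> Ps" "G1 \<noteq> G2" "rainbow_tree G1" "rainbow_tree G2"
  have "\<forall>Tp\<in>Ps. \<forall>Tq\<in>Ps. Tp \<noteq> Tq \<and> rainbow_tree Tp \<and> rainbow_tree Tq
        \<longrightarrow> verts Tp \<inter> verts Tq = {}" using fkd by (elim conjE)
  then show ?thesis using a by blast
qed

lemma F2: "\<not> (\<exists>C \<subseteq> F. ccycle C \<and> rainbow C \<and> even (card C))"
  using fkd by (elim conjE)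

lemma sub_part: "G \<in> Ps \<Longrightarrow> E \<subseteq> fst ` G \<Longrightarrow> sub F E = sub G E"
proof -
  assume G: "G \<in> Ps" and E: "E \<subseteq> fst ` G"
  have "q \<in> G" if qq: "q \<in> F" "fst q \<in> E" for q
  proof -
    obtain q' where "q' \<in> G" "fst q' = fst q" using E qq by blast
    moreover then have "q' \<in> F" using partF G by blast
    ultimately have "q' = q" using cg_uniq[OF cgF] qq(1) by blast
    then show ?thesis using \<open>q' \<in> G\<close> by simp
  qed
  moreover have "G \<subseteq> F" using partF[OF G] .
  ultimately show ?thesis unfolding sub_def by blast
qed

lemma no_even:
  assumes d: "distinct cs" and l: "3 \<le> length cs" and E: "cyc cs \<subseteq> fst ` F"
    and inj: "inj_on snd (sub F (cyc cs))"
  shows "odd (length cs)"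
proof
  assume ev: "even (length cs)"
  define C where "C = sub F (cyc cs)"
  have CF: "C \<subseteq> F" unfolding C_def sub_def by blast
  have cgC: "cgraph C" using cg_subset[OF cgF CF] .
  have fC: "fst ` C = cyc cs"
  proof
    show "fst ` C \<subseteq> cyc cs" unfolding C_def sub_def by blast
    show "cyc cs \<subseteq> fst ` C"
    proof
      fix e assume "e \<in> cyc cs"
      then obtain q where "q \<in> F" "fst q = e" using E by blast
      then show "e \<in> fst ` C" unfolding C_def sub_def using \<open>e \<in> cyc cs\<close> by blast
    qed
  qed
  have "ccycle C" unfolding ccycle_def using cgC fC ucycle_cyc[OF d l] by simp
  moreover have "rainbow C" unfolding rainbow_def colors_def
    using card_image[OF inj] unfolding C_def .
  moreover have "card C = length cs" using cg_card_fst[OF cgC] fC card_cyc[OF d l] by simp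
  ultimately have "\<exists>C \<subseteq> F. ccycle C \<and> rainbow C \<and> even (card C)" using CF ev by auto
  then show False using F2 by blast
qed

lemma inj_sub: "inj_on snd G \<Longrightarrow> inj_on snd (sub G E)"
  unfolding sub_def by (rule inj_on_subset) auto

lemma real_tree:
  assumes G: "G \<in> Ps" and T: "rainbow_tree G" and xy: "x \<in> verts G" "y \<in> verts G" "x \<noteq> y"
  shows "\<exists>p. rp G x y p"
proof -
  have cg: "cgraph G" and tr: "is_utree (fst ` G)" and rb: "rainbow G"
    using T unfolding rainbow_tree_def ctree_def by simp_all
  have "uconnected (fst ` G)" using tr unfolding is_utree_def by simp
  moreover have "x \<in> \<Union> (fst ` G)" "y \<in> \<Union> (fst ` G)" using xy unfolding verts_def by simp_all
  ultimately have "(x, y) \<in> (uadj (fst ` G))\<^sup>*" unfolding uconnected_def by blast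
  then obtain p where p: "lpath p x y" "upath_edges p \<subseteq> fst ` G" using path_rtrancl2[OF _ xy(3)] by blast
  have "inj_on snd (sub G (upath_edges p))" using inj_sub[OF rainbow_inj[OF cg rb]] .
  then show ?thesis unfolding rp_def using p by blast
qed

lemma real_cyc:
  assumes G: "G \<in> Ps" and C: "long_rainbow_odd_cycle G" and xy: "x \<in> verts G" "y \<in> verts G" "x \<noteq> y"
  shows "\<exists>p. rp G x y p \<and> even (length p) = bb"
proof -
  have cg: "cgraph G" and uc: "is_ucycle (fst ` G)" and rb: "rainbow G" and od: "odd (card G)"
    using C unfolding long_rainbow_odd_cycle_def ccycle_def by auto
  obtain cs where cs: "distinct cs" "3 \<le> length cs" "fst ` G = cyc cs" using ucycle_obtain[OF uc] by blast
  have vG: "verts G = set cs" unfolding verts_def using cs(3) union_cyc[OF cs(2)] by simp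
  have "card G = length cs" using cg_card_fst[OF cg] cs(3) card_cyc[OF cs(1,2)] by simp
  then have odn: "odd (length cs)" using od by simp
  obtain r1 r2 where r: "lpath r1 x y" "lpath r2 x y" "upath_edges r1 \<subseteq> cyc cs"
      "upath_edges r2 \<subseteq> cyc cs" "length r1 + length r2 = length cs + 2"
    using arcs[OF cs(1) _ _ xy(3)] xy vG by auto
  have par: "even (length r1) \<noteq> even (length r2)" using r(5) odn by presburger
  have ij: "inj_on snd (sub G E)" for E
    using inj_sub[OF rainbow_inj[OF cg rb]] .
  show ?thesis
  proof (cases "even (length r1) = bb")
    case True
    have "rp G x y r1" unfolding rp_def using r(1,3) cs(3) ij by simp
    then show ?thesis using True by blast
  next
    case False then have "even (length r2) = bb" using par by blast
    moreover have "rp G x y r2" unfolding rp_def using r(2,4) cs(3) ij by simp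
    ultimately show ?thesis by blast
  qed
qed

end


lemma theta_cycle:
  assumes p1: "lpath q1 s t" and pc: "lpath qc s t" and s1: "set q1 \<inter> set qc \<subseteq> {s,t}"
    and e1: "upath_edges q1 \<inter> upath_edges qc = {}"
  shows "\<exists>cs. distinct cs \<and> 3 \<le> length cs \<and> length cs + 2 = length q1 + length qc
    \<and> cyc cs = upath_edges q1 \<union> upath_edges qc"
proof -
  define cs where "cs = q1 @ butlast (tl (rev qc))"
  have rc: "lpath (rev qc) t s" using lpath_rev[OF pc] .
  have s1': "set q1 \<inter> set (rev qc) \<subseteq> {s,t}" using s1 by simp
  note CW = closed_walk[OF p1 rc s1' cs_def]
  have "length cs \<ge> 3"
  proof (rule ccontr)
    assume "\<not> 3 \<le> length cs"
    then have l2: "length q1 = 2" "length qc = 2" using CW(2) p1 pc unfolding lpath_def by auto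
    have two: "upath_edges q = {{s,t}}" if lq: "lpath q s t" "length q = 2" for q
    proof -
      obtain q' where q': "q = s # q'" "q' \<noteq> []" "last q' = t" using lpath_cons[OF lq(1)] by blast
      then have "length q' = 1" using lq(2) by simp
      then obtain z where "q' = [z]" by (cases q') auto
      then show ?thesis using q' by simp
    qed
    have "upath_edges q1 = {{s,t}}" "upath_edges qc = {{s,t}}" using two p1 pc l2 by auto
    then show False using e1 by auto
  qed
  moreover have "length cs + 2 = length q1 + length qc" using CW(2) by simp
  moreover have "cyc cs = upath_edges q1 \<union> upath_edges qc" using CW(3) by simp
  ultimately show ?thesis using CW(1) by blast
qed

context fr
begin

lemma bad_gen:
  assumes G: "G \<in> Ps" and pa: "lpath qa s t" and pb: "lpath qb s t" and pc: "lpath qc s t"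
    and sab: "set qa \<inter> set qb \<subseteq> {s,t}" and sac: "set qa \<inter> set qc \<subseteq> {s,t}"
    and sbc: "set qb \<inter> set qc \<subseteq> {s,t}"
    and eab: "upath_edges qa \<inter> upath_edges qb = {}" and eac: "upath_edges qa \<inter> upath_edges qc = {}"
    and ebc: "upath_edges qb \<inter> upath_edges qc = {}"
    and FG: "fst ` G = upath_edges qa \<union> upath_edges qb \<union> upath_edges qc"
    and e: "e \<in> G" "fst e \<in> upath_edges qa" "inj_on snd (G - {e})"
    and e': "e' \<in> G" "fst e' \<in> upath_edges qb" "inj_on snd (G - {e'})"
    and xy: "x \<in> verts G" "y \<in> verts G" "x \<noteq> y"
  shows "\<exists>p. rp G x y p \<and> even (length p) = bb"
proof -
  have subrem: "inj_on snd (sub G E)" if "fst f \<notin> E" "inj_on snd (G - {f})" for E f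
  proof -
    have "sub G E \<subseteq> G - {f}" unfolding sub_def using that(1) by auto
    then show ?thesis using that(2) by (rule inj_on_subset[rotated])
  qed
  have odd1: "odd (length q1 + length qc)"
    if q1: "lpath q1 s t" "set q1 \<inter> set qc \<subseteq> {s,t}" "upath_edges q1 \<inter> upath_edges qc = {}"
      "upath_edges q1 \<subseteq> fst ` G" "fst f \<notin> upath_edges q1 \<union> upath_edges qc" "inj_on snd (G - {f})" for q1 f
  proof -
    obtain cs where cs: "distinct cs" "3 \<le> length cs" "length cs + 2 = length q1 + length qc"
      "cyc cs = upath_edges q1 \<union> upath_edges qc" using theta_cycle[OF q1(1) pc q1(2,3)] by blast
    have cG: "cyc cs \<subseteq> fst ` G" using cs(4) q1(4) FG by blast
    have cF: "cyc cs \<subseteq> fst ` F" using cG partF[OF G] by blast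
    have "inj_on snd (sub G (cyc cs))" using subrem q1(5,6) cs(4) by simp
    then have "inj_on snd (sub F (cyc cs))" using sub_part[OF G cG] by simp
    then have "odd (length cs)" using no_even[OF cs(1,2) cF] by blast
    then show ?thesis using cs(3) by presburger
  qed
  have oac: "odd (length qa + length qc)"
  proof (rule odd1[OF pa sac eac _ _ e'(3)])
    show "upath_edges qa \<subseteq> fst ` G" using FG by blast
    show "fst e' \<notin> upath_edges qa \<union> upath_edges qc" using e'(2) eab ebc by blast
  qed
  have obc: "odd (length qb + length qc)"
  proof (rule odd1[OF pb sbc ebc _ _ e(3)])
    show "upath_edges qb \<subseteq> fst ` G" using FG by blast
    show "fst e \<notin> upath_edges qb \<union> upath_edges qc" using e(2) eab eac by blast
  qed
  have vG: "verts G = set qa \<union> set qb \<union> set qc"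
  proof -
    have "verts G = \<Union> (upath_edges qa) \<union> \<Union> (upath_edges qb) \<union> \<Union> (upath_edges qc)"
      unfolding verts_def FG by simp
    then show ?thesis using ue_union pa pb pc unfolding lpath_def by metis
  qed
  obtain p where p: "lpath p x y" "upath_edges p \<subseteq> upath_edges qa \<union> upath_edges qb \<union> upath_edges qc"
     "fst e \<notin> upath_edges p \<or> fst e' \<notin> upath_edges p" "even (length p) = bb"
    using theta_all[OF pa pb pc sab sac sbc eab eac ebc oac obc e(2) e'(2), of x y bb] xy vG by blast
  have "inj_on snd (sub G (upath_edges p))" using p(3) subrem e(3) e'(3) by blast
  moreover have "upath_edges p \<subseteq> fst ` G" using p(2) FG by simp
  ultimately show ?thesis unfolding rp_def using p(1,4) by blast
qed

end


context fr
begin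

lemma cpath_list: "cpath P s t \<Longrightarrow> \<exists>q. lpath q s t \<and> fst ` P = upath_edges q \<and> verts P = set q"
proof -
  assume "cpath P s t"
  then have "is_upath (fst ` P) s t" unfolding cpath_def by (elim conjE)
  then have "\<exists>q. lpath q s t \<and> fst ` P = upath_edges q" by (rule upath_lpath)
  then obtain q where q: "lpath q s t" "fst ` P = upath_edges q" by blast
  have l: "2 \<le> length q" using q(1) unfolding lpath_def by simp
  have "verts P = set q" by (rule verts_ue[OF l q(2)])
  then show ?thesis using q by blast
qed

lemma real_bad:
  assumes G: "G \<in> Ps" and B: "bad_piece G" and xy: "x \<in> verts G" "y \<in> verts G" "x \<noteq> y"
  shows "\<exists>p. rp G x y p \<and> even (length p) = bb"
proof -
  have cg: "cgraph G" using part_cg[OF G] .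
  note Bd = B[unfolded bad_piece_def]
  have ar: "almost_rainbow G" using Bd by (elim conjE)
  have "\<exists>P1 P2 P3 s t. theta_paths P1 P2 P3 s t \<and> rainbow P1 \<and> rainbow P2 \<and> rainbow P3
        \<and> G = P1 \<union> P2 \<union> P3" using Bd by (elim conjE)
  then obtain P1 P2 P3 s t where th: "theta_paths P1 P2 P3 s t" and rb: "rainbow P1" "rainbow P2" "rainbow P3"
    and GP: "G = P1 \<union> P2 \<union> P3" by blast
  note thd = th[unfolded theta_paths_def]
  have cp: "cpath P1 s t" "cpath P2 s t" "cpath P3 s t" using thd by simp_all
  have vv: "verts P1 \<inter> verts P2 \<subseteq> {s, t}" "verts P1 \<inter> verts P3 \<subseteq> {s, t}" "verts P2 \<inter> verts P3 \<subseteq> {s, t}"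
    using thd by simp_all
  have ee: "fst ` P1 \<inter> fst ` P2 = {}" "fst ` P1 \<inter> fst ` P3 = {}" "fst ` P2 \<inter> fst ` P3 = {}"
    using thd by simp_all
  obtain q1 where q1: "lpath q1 s t" "fst ` P1 = upath_edges q1" "verts P1 = set q1" using cpath_list[OF cp(1)] by blast
  obtain q2 where q2: "lpath q2 s t" "fst ` P2 = upath_edges q2" "verts P2 = set q2" using cpath_list[OF cp(2)] by blast
  obtain q3 where q3: "lpath q3 s t" "fst ` P3 = upath_edges q3" "verts P3 = set q3" using cpath_list[OF cp(3)] by blast
  have S12: "set q1 \<inter> set q2 \<subseteq> {s,t}" using vv(1) q1(3) q2(3) by simp
  have S13: "set q1 \<inter> set q3 \<subseteq> {s,t}" using vv(2) q1(3) q3(3) by simp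
  have S23: "set q2 \<inter> set q3 \<subseteq> {s,t}" using vv(3) q2(3) q3(3) by simp
  have S21: "set q2 \<inter> set q1 \<subseteq> {s,t}" using S12 by blast
  have S31: "set q3 \<inter> set q1 \<subseteq> {s,t}" using S13 by blast
  have S32: "set q3 \<inter> set q2 \<subseteq> {s,t}" using S23 by blast
  have U12: "upath_edges q1 \<inter> upath_edges q2 = {}" using ee(1) q1(2) q2(2) by simp
  have U13: "upath_edges q1 \<inter> upath_edges q3 = {}" using ee(2) q1(2) q3(2) by simp
  have U23: "upath_edges q2 \<inter> upath_edges q3 = {}" using ee(3) q2(2) q3(2) by simp
  have U21: "upath_edges q2 \<inter> upath_edges q1 = {}" using U12 by blast
  have U31: "upath_edges q3 \<inter> upath_edges q1 = {}" using U13 by blast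
  have U32: "upath_edges q3 \<inter> upath_edges q2 = {}" using U23 by blast
  have FG: "fst ` G = upath_edges q1 \<union> upath_edges q2 \<union> upath_edges q3"
    using GP q1(2) q2(2) q3(2) by (simp add: image_Un)
  have F123: "fst ` G = upath_edges q1 \<union> upath_edges q2 \<union> upath_edges q3" using FG .
  have F132: "fst ` G = upath_edges q1 \<union> upath_edges q3 \<union> upath_edges q2" using FG by blast
  have F213: "fst ` G = upath_edges q2 \<union> upath_edges q1 \<union> upath_edges q3" using FG by blast
  have F231: "fst ` G = upath_edges q2 \<union> upath_edges q3 \<union> upath_edges q1" using FG by blast
  have F312: "fst ` G = upath_edges q3 \<union> upath_edges q1 \<union> upath_edges q2" using FG by blast
  have F321: "fst ` G = upath_edges q3 \<union> upath_edges q2 \<union> upath_edges q1" using FG by blast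
  have fin: "finite G" using cg unfolding cgraph_def by simp
  have ninj: "\<not> inj_on snd G"
  proof
    assume "inj_on snd G"
    then have "card (snd ` G) = card G" by (rule card_image)
    then show False using ar unfolding almost_rainbow_def colors_def by simp
  qed
  then obtain e e' where ee': "e \<in> G" "e' \<in> G" "e \<noteq> e'" "snd e = snd e'"
    unfolding inj_on_def by blast
  have injrem: "inj_on snd (G - {f})" if f: "f \<in> G" "f' \<in> G" "f \<noteq> f'" "snd f = snd f'" for f f'
  proof -
    have im: "snd ` (G - {f}) = snd ` G"
    proof
      show "snd ` (G - {f}) \<subseteq> snd ` G" by blast
      show "snd ` G \<subseteq> snd ` (G - {f})"
      proof
        fix c assume "c \<in> snd ` G"
        then obtain q where q: "q \<in> G" "c = snd q" by blast
        show "c \<in> snd ` (G - {f})"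
        proof (cases "q = f")
          case True then have "c = snd f'" using q f by simp
          then show ?thesis using f by blast
        next
          case False then show ?thesis using q by blast
        qed
      qed
    qed
    have "card (G - {f}) = card G - 1" using f(1) by (rule card_Diff_singleton)
    also have "\<dots> = card (snd ` G)" using ar unfolding almost_rainbow_def colors_def by simp
    finally have "card (snd ` (G - {f})) = card (G - {f})" using im by simp
    moreover have "finite (G - {f})" using fin by simp
    ultimately show ?thesis using inj_on_iff_eq_card by blast
  qed
  have ie: "inj_on snd (G - {e})" using injrem[OF ee'] .
  have ie': "inj_on snd (G - {e'})" using injrem[of e' e] ee' by simp
  have inP: "fst f \<in> upath_edges q" if "f \<in> P" "fst ` P = upath_edges q" for f P and q :: "'v list"
    using that by blast
  have notsame: False if "e \<in> P" "e' \<in> P" "rainbow P" "cpath P s t" for P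
  proof -
    have "inj_on snd P" using rainbow_inj[of P] that(3,4) unfolding cpath_def by simp
    then show False using that(1,2) ee'(3,4) unfolding inj_on_def by blast
  qed
  have eP: "e \<in> P1 \<or> e \<in> P2 \<or> e \<in> P3" and eP': "e' \<in> P1 \<or> e' \<in> P2 \<or> e' \<in> P3"
    using ee'(1,2) GP by auto
  note call = bad_gen[OF G _ _ _ _ _ _ _ _ _ _ _ _ ie _ _ ie' xy]
  show ?thesis
  proof -
    { assume a: "e \<in> P1" "e' \<in> P2"
      have ?thesis by (rule call[OF q1(1) q2(1) q3(1) S12 S13 S23 U12 U13 U23 F123 ee'(1) inP[OF a(1) q1(2)] ee'(2) inP[OF a(2) q2(2)]]) }
    moreover
    { assume a: "e \<in> P1" "e' \<in> P3"
      have ?thesis by (rule call[OF q1(1) q3(1) q2(1) S13 S12 S32 U13 U12 U32 F132 ee'(1) inP[OF a(1) q1(2)] ee'(2) inP[OF a(2) q3(2)]]) }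
    moreover
    { assume a: "e \<in> P2" "e' \<in> P1"
      have ?thesis by (rule call[OF q2(1) q1(1) q3(1) S21 S23 S13 U21 U23 U13 F213 ee'(1) inP[OF a(1) q2(2)] ee'(2) inP[OF a(2) q1(2)]]) }
    moreover
    { assume a: "e \<in> P2" "e' \<in> P3"
      have ?thesis by (rule call[OF q2(1) q3(1) q1(1) S23 S21 S31 U23 U21 U31 F231 ee'(1) inP[OF a(1) q2(2)] ee'(2) inP[OF a(2) q3(2)]]) }
    moreover
    { assume a: "e \<in> P3" "e' \<in> P1"
      have ?thesis by (rule call[OF q3(1) q1(1) q2(1) S31 S32 S12 U31 U32 U12 F312 ee'(1) inP[OF a(1) q3(2)] ee'(2) inP[OF a(2) q1(2)]]) }
    moreover
    { assume a: "e \<in> P3" "e' \<in> P2"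
      have ?thesis by (rule call[OF q3(1) q2(1) q1(1) S32 S31 S21 U32 U31 U21 F321 ee'(1) inP[OF a(1) q3(2)] ee'(2) inP[OF a(2) q2(2)]]) }
    moreover have "\<not> (e \<in> P1 \<and> e' \<in> P1)" using notsame rb(1) cp(1) by blast
    moreover have "\<not> (e \<in> P2 \<and> e' \<in> P2)" using notsame rb(2) cp(2) by blast
    moreover have "\<not> (e \<in> P3 \<and> e' \<in> P3)" using notsame rb(3) cp(3) by blast
    ultimately show ?thesis using eP eP' by blast
  qed
qed

lemma real_par:
  assumes G: "G \<in> Ps" and NT: "\<not> rainbow_tree G" and xy: "x \<in> verts G" "y \<in> verts G" "x \<noteq> y"
  shows "\<exists>p. rp G x y p \<and> even (length p) = bb"
  using types[OF G] NT real_cyc[OF G _ xy] real_bad[OF G _ xy] by blast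

lemma real_any:
  assumes G: "G \<in> Ps" and xy: "x \<in> verts G" "y \<in> verts G" "x \<noteq> y"
  shows "\<exists>p. rp G x y p"
  using real_par[OF G _ xy] real_tree[OF G _ xy] by blast

end


definition pcyc :: "('v, 'c) cgraph set \<Rightarrow> nat \<Rightarrow> (nat \<Rightarrow> ('v, 'c) cgraph) \<Rightarrow> (nat \<Rightarrow> 'v) \<Rightarrow> bool" where
  "pcyc Ps k g v \<longleftrightarrow> 2 \<le> k \<and> inj_on g {..<k} \<and> inj_on v {..<k} \<and>
     (\<forall>i<k. g i \<in> Ps \<and> v i \<in> verts (g i) \<and> v i \<in> verts (g (Suc i mod k)))"

lemma mod_lt2: "(x::nat) < 2 * k \<Longrightarrow> x mod k = (if x < k then x else x - k)"
  by (simp add: le_mod_geq mod_less)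

lemma rot_inj: "(r::nat) < k \<Longrightarrow> inj_on (\<lambda>m. (m + r) mod k) {..<k}"
proof (rule inj_onI)
  fix a b assume r: "r < k" and ab: "a \<in> {..<k}" "b \<in> {..<k}" "(a + r) mod k = (b + r) mod k"
  have a2: "a + r < 2 * k" "b + r < 2 * k" using ab r by auto
  have "(if a + r < k then a + r else a + r - k) = (if b + r < k then b + r else b + r - k)"
    using ab(3) mod_lt2[OF a2(1)] mod_lt2[OF a2(2)] by simp
  then show "a = b" using ab(1,2) by (auto split: if_splits)
qed

lemma pc_rot:
  assumes pc: "pcyc Ps k g v" and r: "r < k"
  shows "pcyc Ps k (\<lambda>m. g ((m + r) mod k)) (\<lambda>m. v ((m + r) mod k))"
proof -
  have k: "2 \<le> k" and ig: "inj_on g {..<k}" and iv: "inj_on v {..<k}"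
    and c: "\<forall>i<k. g i \<in> Ps \<and> v i \<in> verts (g i) \<and> v i \<in> verts (g (Suc i mod k))"
    using pc unfolding pcyc_def by simp_all
  have img: "(\<lambda>m. (m + r) mod k) ` {..<k} \<subseteq> {..<k}" using k by auto
  have "inj_on (\<lambda>m. g ((m + r) mod k)) {..<k}"
    using comp_inj_on[OF rot_inj[OF r] inj_on_subset[OF ig img]] by (simp add: o_def)
  moreover have "inj_on (\<lambda>m. v ((m + r) mod k)) {..<k}"
    using comp_inj_on[OF rot_inj[OF r] inj_on_subset[OF iv img]] by (simp add: o_def)
  moreover have "g ((i + r) mod k) \<in> Ps \<and> v ((i + r) mod k) \<in> verts (g ((i + r) mod k))
     \<and> v ((i + r) mod k) \<in> verts (g ((Suc i mod k + r) mod k))" if i: "i < k" for i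
  proof -
    have lt: "(i + r) mod k < k" using k by simp
    have e: "Suc ((i + r) mod k) mod k = (Suc i mod k + r) mod k"
      by (simp add: mod_Suc_eq mod_add_left_eq)
    have "g ((i + r) mod k) \<in> Ps" "v ((i + r) mod k) \<in> verts (g ((i + r) mod k))"
      "v ((i + r) mod k) \<in> verts (g (Suc ((i + r) mod k) mod k))" using c lt by blast+
    then show ?thesis unfolding e by blast
  qed
  ultimately show ?thesis unfolding pcyc_def using k by blast
qed

lemma pc_short:
  assumes pc: "pcyc Ps k g v" and j: "2 \<le> j" "j + 2 \<le> k"
    and w: "w \<in> verts (g 0)" "w \<in> verts (g j)" "w \<notin> v ` {..<j}"
  shows "pcyc Ps (j + 1) g (v(j := w))"
proof -
  have k: "2 \<le> k" and ig: "inj_on g {..<k}" and iv: "inj_on v {..<k}"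
    and c: "\<forall>i<k. g i \<in> Ps \<and> v i \<in> verts (g i) \<and> v i \<in> verts (g (Suc i mod k))"
    using pc unfolding pcyc_def by simp_all
  have sj: "{..<j+1} \<subseteq> {..<k}" "{..<j} \<subseteq> {..<k}" using j by auto
  have "inj_on g {..<j+1}" using inj_on_subset[OF ig sj(1)] .
  moreover have "inj_on (v(j := w)) {..<j+1}"
  proof -
    have iv': "inj_on v {..<j}" using inj_on_subset[OF iv sj(2)] .
    have eq: "\<And>a. a \<in> {..<j} \<Longrightarrow> (v(j := w)) a = v a" by simp
    have i1: "inj_on (v(j := w)) {..<j}" using inj_on_cong[of "{..<j}" "v(j := w)" v] eq iv' by blast
    have im: "(v(j := w)) ` {..<j} = v ` {..<j}" using eq by (rule image_cong[OF refl])
    have nin: "(v(j := w)) j \<notin> (v(j := w)) ` ({..<j} - {j})" using w(3) im by simp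
    have "inj_on (v(j := w)) (insert j {..<j})" using i1 nin by (simp only: inj_on_insert) blast
    moreover have "{..<j+1} = insert j {..<j}" by auto
    ultimately show ?thesis by simp
  qed
  moreover have "g i \<in> Ps \<and> (v(j := w)) i \<in> verts (g i) \<and> (v(j := w)) i \<in> verts (g (Suc i mod (j + 1)))"
    if i: "i < j + 1" for i
  proof (cases "i = j")
    case True
    have jk: "j < k" using j by simp
    have "g j \<in> Ps" using c jk by blast
    moreover have "Suc j mod (j + 1) = 0" by simp
    ultimately show ?thesis using True w(1,2) by simp
  next
    case False
    then have ij: "i < j" using i by simp
    have e: "Suc i mod (j+1) = Suc i" "Suc i mod k = Suc i" using ij j by (simp_all add: mod_less)
    have ik: "i < k" using ij j by simp
    have "g i \<in> Ps" "v i \<in> verts (g i)" "v i \<in> verts (g (Suc i mod k))" using c ik by blast+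
    then show ?thesis using e False by simp
  qed
  ultimately show ?thesis unfolding pcyc_def using j by simp
qed


definition minpc :: "('v, 'c) cgraph set \<Rightarrow> nat \<Rightarrow> (nat \<Rightarrow> ('v, 'c) cgraph) \<Rightarrow> (nat \<Rightarrow> 'v) \<Rightarrow> bool" where
  "minpc Ps k g v \<longleftrightarrow> pcyc Ps k g v \<and> (\<forall>k' < k. \<forall>g' v'. \<not> pcyc Ps k' g' v')"

lemma pcyc_facts:
  assumes "pcyc Ps k g v"
  shows "2 \<le> k" "inj_on g {..<k}" "inj_on v {..<k}"
    "\<And>i. i < k \<Longrightarrow> g i \<in> Ps" "\<And>i. i < k \<Longrightarrow> v i \<in> verts (g i)"
    "\<And>i. i < k \<Longrightarrow> v i \<in> verts (g (Suc i mod k))"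
  using assms unfolding pcyc_def by simp_all

lemma short0:
  assumes m: "minpc Ps k g v" and d: "2 \<le> d" "d + 2 \<le> k" and w: "w \<in> verts (g 0)" "w \<in> verts (g d)"
  shows "\<exists>l<d. w = v l"
proof (rule ccontr)
  assume "\<not> (\<exists>l<d. w = v l)"
  then have "w \<notin> v ` {..<d}" by auto
  then have "pcyc Ps (d + 1) g (v(d := w))"
    using pc_short[of Ps k g v d w] m d w unfolding minpc_def by blast
  moreover have "d + 1 < k" using d by simp
  ultimately show False using m unfolding minpc_def by blast
qed

lemma chord0:
  assumes m: "minpc Ps k g v" and d: "2 \<le> d" "d + 2 \<le> k" and w: "w \<in> verts (g 0)" "w \<in> verts (g d)"
  shows False
proof -
  obtain l where l: "l < d" "w = v l" using short0[OF m d w] by blast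
  have pc: "pcyc Ps k g v" using m unfolding minpc_def by simp
  have dk: "d < k" using d by simp
  define g2 where "g2 = (\<lambda>m. g ((m + d) mod k))"
  define v2 where "v2 = (\<lambda>m. v ((m + d) mod k))"
  have pc2: "pcyc Ps k g2 v2" unfolding g2_def v2_def by (rule pc_rot[OF pc dk])
  have m2: "minpc Ps k g2 v2" using pc2 m unfolding minpc_def by blast
  have d2: "2 \<le> k - d" "k - d + 2 \<le> k" using d by simp_all
  have w2: "w \<in> verts (g2 0)" "w \<in> verts (g2 (k - d))" using w dk unfolding g2_def by simp_all
  obtain l' where l': "l' < k - d" "w = v2 l'" using short0[OF m2 d2 w2] by blast
  have "v2 l' = v (l' + d)" unfolding v2_def using l'(1) by simp
  then have "v l = v (l' + d)" using l l' by simp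
  moreover have "l < k" "l' + d < k" using l(1) l'(1) dk by simp_all
  ultimately have "l = l' + d" using pcyc_facts(3)[OF pc] unfolding inj_on_def by blast
  then show False using l(1) by simp
qed

lemma chord:
  assumes m: "minpc Ps k g v" and ij: "i < j" "j < k" "j \<noteq> Suc i" "\<not> (i = 0 \<and> j = k - 1)"
  shows "verts (g i) \<inter> verts (g j) = {}"
proof (rule ccontr)
  assume "verts (g i) \<inter> verts (g j) \<noteq> {}"
  then obtain w where w: "w \<in> verts (g i)" "w \<in> verts (g j)" by blast
  have pc: "pcyc Ps k g v" using m unfolding minpc_def by simp
  have ik: "i < k" using ij by simp
  define g2 where "g2 = (\<lambda>m. g ((m + i) mod k))"
  define v2 where "v2 = (\<lambda>m. v ((m + i) mod k))"
  have pc2: "pcyc Ps k g2 v2" unfolding g2_def v2_def by (rule pc_rot[OF pc ik])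
  have m2: "minpc Ps k g2 v2" using pc2 m unfolding minpc_def by blast
  have d: "2 \<le> j - i" "j - i + 2 \<le> k" using ij by auto
  have w2: "w \<in> verts (g2 0)" "w \<in> verts (g2 (j - i))" using w ik ij unfolding g2_def by simp_all
  show False by (rule chord0[OF m2 d w2])
qed

context fr
begin

lemma pc_k3: "pcyc Ps k g v \<Longrightarrow> 3 \<le> k"
proof (rule ccontr)
  assume pc: "pcyc Ps k g v" and "\<not> 3 \<le> k"
  then have k: "k = 2" using pcyc_facts(1)[OF pc] by simp
  have "g 0 \<noteq> g 1" using inj_onD[OF pcyc_facts(2)[OF pc], of 0 1] k by auto
  moreover have "v 0 \<noteq> v 1" using inj_onD[OF pcyc_facts(3)[OF pc], of 0 1] k by auto
  moreover have "v 0 \<in> verts (g 0)" "v 0 \<in> verts (g 1)" "v 1 \<in> verts (g 1)" "v 1 \<in> verts (g 0)"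
    using pcyc_facts(5,6)[OF pc, of 0] pcyc_facts(5,6)[OF pc, of 1] k by simp_all
  moreover have "g 0 \<in> Ps" "g 1 \<in> Ps" using pcyc_facts(4)[OF pc] k by simp_all
  ultimately show False using share1 by metis
qed

end


context fr
begin

lemma rp_set: "rp G x y p \<Longrightarrow> set p \<subseteq> verts G"
proof -
  assume r: "rp G x y p"
  then have l: "2 \<le> length p" and e: "upath_edges p \<subseteq> fst ` G" unfolding rp_def lpath_def by simp_all
  have "set p = \<Union> (upath_edges p)" using ue_union[OF l] by simp
  then show ?thesis using e unfolding verts_def by blast
qed

lemma no_minpc:
  assumes m: "minpc Ps k g v"
  shows False
proof -
  have pc: "pcyc Ps k g v" using m unfolding minpc_def by simp
  have k3: "3 \<le> k" using pc_k3[OF pc] .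
  note ig = pcyc_facts(2)[OF pc] and iv = pcyc_facts(3)[OF pc]
  note gP = pcyc_facts(4)[OF pc] and vg = pcyc_facts(5)[OF pc] and vg2 = pcyc_facts(6)[OF pc]
  have gne: "g i \<noteq> g j" if "i < k" "j < k" "i \<noteq> j" for i j
    using inj_onD[OF ig, of i j] that by auto
  have vne: "v i \<noteq> v j" if "i < k" "j < k" "i \<noteq> j" for i j
    using inj_onD[OF iv, of i j] that by auto
  define a where "a i = (if i = 0 then v (k - 1) else v (i - 1))" for i
  have aG: "a i \<in> verts (g i)" if "i < k" for i
  proof (cases "i = 0")
    case True
    have "Suc (k - 1) mod k = 0" using k3 by simp
    then show ?thesis using vg2[of "k - 1"] True k3 unfolding a_def by simp
  next
    case False
    have "Suc (i - 1) mod k = i" using that False by simp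
    then show ?thesis using vg2[of "i - 1"] False that unfolding a_def by simp
  qed
  have av: "a i \<noteq> v i" if "i < k" for i
    unfolding a_def using vne[of "k - 1" 0] vne[of "i - 1" i] that k3 by auto
  obtain i0 where i0: "i0 < k" "\<not> rainbow_tree (g i0)"
  proof -
    have "v 0 \<in> verts (g 0)" "v 0 \<in> verts (g 1)" using vg[of 0] vg2[of 0] k3 by simp_all
    then have "verts (g 0) \<inter> verts (g 1) \<noteq> {}" by blast
    then have "\<not> (rainbow_tree (g 0) \<and> rainbow_tree (g 1))"
      using treedisj[OF gP[of 0] gP[of 1] gne[of 0 1]] k3 by auto
    then show ?thesis using that k3 by (metis One_nat_def Suc_le_eq le_trans numeral_3_eq_3 zero_less_Suc less_imp_le_nat)
  qed
  define p0 where "p0 i = (SOME p. rp (g i) (a i) (v i) p)" for i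
  have p0: "rp (g i) (a i) (v i) (p0 i)" if "i < k" for i
  proof -
    have "\<exists>p. rp (g i) (a i) (v i) p" using real_any[OF gP[OF that] aG[OF that] vg[OF that] av[OF that]] .
    then show ?thesis unfolding p0_def by (rule someI_ex)
  qed
  define T where "T = (\<Sum>i\<in>{..<k} - {i0}. length (p0 i) - 1)"
  obtain q where q: "rp (g i0) (a i0) (v i0) q" "even (length q) = odd T"
    using real_par[OF gP[OF i0(1)] i0(2) aG[OF i0(1)] vg[OF i0(1)] av[OF i0(1)]] by blast
  define p where "p = p0(i0 := q)"
  have pp: "rp (g i) (a i) (v i) (p i)" if "i < k" for i
    using p0[OF that] q(1) unfolding p_def by (cases "i = i0") simp_all
  have lp: "lpath (p i) (a i) (v i)" if "i < k" for i using pp[OF that] unfolding rp_def by simp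
  have L2: "2 \<le> length (p i)" if "i < k" for i using lp[OF that] unfolding lpath_def by simp
  have psub: "set (p i) \<subseteq> verts (g i)" if "i < k" for i using rp_set[OF pp[OF that]] .
  have pE: "upath_edges (p i) \<subseteq> fst ` (g i)" if "i < k" for i using pp[OF that] unfolding rp_def by simp
  have sum_even: "even (\<Sum>i<k. length (p i) - 1)"
  proof -
    have fin: "finite {..<k}" by simp
    have "(\<Sum>i<k. length (p i) - 1) = (length (p i0) - 1) + (\<Sum>i\<in>{..<k} - {i0}. length (p i) - 1)"
      using sum.remove[OF fin, of i0] i0(1) by simp
    moreover have "(\<Sum>i\<in>{..<k} - {i0}. length (p i) - 1) = T"
      unfolding T_def p_def by (rule sum.cong) auto
    moreover have "p i0 = q" unfolding p_def by simp
    moreover have "2 \<le> length q" using L2[OF i0(1)] unfolding p_def by simp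
    ultimately show ?thesis using q(2) by presburger
  qed
  have adj: "set (p i) \<inter> set (p (Suc i)) \<subseteq> {v i}" if "Suc i < k" for i
  proof
    fix z assume z: "z \<in> set (p i) \<inter> set (p (Suc i))"
    have ik: "i < k" using that by simp
    have "z \<in> verts (g i)" "z \<in> verts (g (Suc i))" using z psub[OF ik] psub[OF that] by blast+
    moreover have "v i \<in> verts (g i)" "v i \<in> verts (g (Suc i))" using vg[OF ik] vg2[OF ik] that by simp_all
    ultimately have "z = v i" using share1[OF gP[OF ik] gP[OF that] gne[OF ik that n_not_Suc_n]] by blast
    then show "z \<in> {v i}" by simp
  qed
  have clo: "set (p 0) \<inter> set (p (k - 1)) \<subseteq> {v (k - 1)}"
  proof
    fix z assume z: "z \<in> set (p 0) \<inter> set (p (k - 1))"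
    have k0: "0 < k" "k - 1 < k" using k3 by simp_all
    have "z \<in> verts (g 0)" "z \<in> verts (g (k - 1))" using z psub[OF k0(1)] psub[OF k0(2)] by blast+
    moreover have "Suc (k - 1) mod k = 0" using k3 by simp
    then have "v (k - 1) \<in> verts (g 0)" "v (k - 1) \<in> verts (g (k - 1))" using vg[OF k0(2)] vg2[OF k0(2)] by simp_all
    moreover have "0 \<noteq> k - 1" using k3 by simp
    ultimately have "z = v (k - 1)" using share1[OF gP[OF k0(1)] gP[OF k0(2)] gne[OF k0(1) k0(2)]] by blast
    then show "z \<in> {v (k - 1)}" by simp
  qed
  have far: "set (p i) \<inter> set (p j) = {}" if "i < j" "j < k" "j \<noteq> Suc i" "\<not> (i = 0 \<and> j = k - 1)" for i j
  proof -
    have "verts (g i) \<inter> verts (g j) = {}" using chord[OF m that] .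
    then show ?thesis using psub[of i] psub[of j] that by force
  qed
  define W where "W m = p 0 @ concat (map (\<lambda>i. tl (p i)) [1..<Suc m])" for m
  have WS: "W (Suc m) = W m @ tl (p (Suc m))" for m unfolding W_def by simp
  have inv: "m + 2 \<le> k \<longrightarrow> lpath (W m) (v (k - 1)) (v m) \<and> set (W m) = (\<Union>i\<in>{..m}. set (p i))
     \<and> upath_edges (W m) = (\<Union>i\<in>{..m}. upath_edges (p i)) \<and> length (W m) = Suc (\<Sum>i\<le>m. length (p i) - 1)" for m
  proof (induction m)
    case 0
    have "a 0 = v (k - 1)" unfolding a_def by simp
    moreover have k0: "0 < k" using k3 by simp
    moreover have "length (p 0) = Suc (length (p 0) - 1)" using L2[OF k0] by linarith
    ultimately show ?case using lp[OF k0] unfolding W_def by simp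
  next
    case (Suc m)
    show ?case
    proof
      assume mk: "Suc m + 2 \<le> k"
      then have IH: "lpath (W m) (v (k - 1)) (v m)" "set (W m) = (\<Union>i\<in>{..m}. set (p i))"
        "upath_edges (W m) = (\<Union>i\<in>{..m}. upath_edges (p i))" "length (W m) = Suc (\<Sum>i\<le>m. length (p i) - 1)"
        using Suc.IH by simp_all
      have sk: "Suc m < k" using mk by simp
      have lq: "lpath (p (Suc m)) (v m) (v (Suc m))" using lp[OF sk] unfolding a_def by simp
      have int: "set (W m) \<inter> set (p (Suc m)) \<subseteq> {v m}"
      proof -
        have "set (p i) \<inter> set (p (Suc m)) \<subseteq> {v m}" if "i \<le> m" for i
        proof (cases "i = m")
          case True then show ?thesis using adj[OF sk] by simp
        next
          case False
          have "i < Suc m" "Suc m \<noteq> Suc i" "\<not> (i = 0 \<and> Suc m = k - 1)" using False that mk by auto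
          then have "set (p i) \<inter> set (p (Suc m)) = {}" using far[of i "Suc m"] sk by blast
          then show ?thesis by simp
        qed
        then show ?thesis unfolding IH(2) by blast
      qed
      have ne: "v (k - 1) \<noteq> v (Suc m)" using vne[of "k - 1" "Suc m"] mk by simp
      note G = lpath_glue[OF IH(1) lq int ne]
      have "lpath (W (Suc m)) (v (k - 1)) (v (Suc m))" unfolding WS using G(1) .
      moreover have "set (W (Suc m)) = (\<Union>i\<in>{..Suc m}. set (p i))" unfolding WS G(4) IH(2)
        by (simp add: atMost_Suc Un_commute)
      moreover have "upath_edges (W (Suc m)) = (\<Union>i\<in>{..Suc m}. upath_edges (p i))" unfolding WS G(2) IH(3)
        by (simp add: atMost_Suc Un_commute)
      moreover have "length (W (Suc m)) = Suc (\<Sum>i\<le>Suc m. length (p i) - 1)"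
        using G(3) IH(4) L2[OF sk] unfolding WS by simp
      ultimately show "lpath (W (Suc m)) (v (k - 1)) (v (Suc m)) \<and> set (W (Suc m)) = (\<Union>i\<in>{..Suc m}. set (p i))
         \<and> upath_edges (W (Suc m)) = (\<Union>i\<in>{..Suc m}. upath_edges (p i))
         \<and> length (W (Suc m)) = Suc (\<Sum>i\<le>Suc m. length (p i) - 1)" by blast
    qed
  qed
  define M where "M = k - 2"
  have M: "M + 2 \<le> k" "Suc M = k - 1" using k3 unfolding M_def by simp_all
  have WM: "lpath (W M) (v (k - 1)) (v M)" "set (W M) = (\<Union>i\<in>{..M}. set (p i))"
     "upath_edges (W M) = (\<Union>i\<in>{..M}. upath_edges (p i))" "length (W M) = Suc (\<Sum>i\<le>M. length (p i) - 1)"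
    using inv[of M] M(1) by simp_all
  have kl: "k - 1 < k" using k3 by simp
  have "k - 1 - 1 = M" using k3 unfolding M_def by simp
  then have am: "a (k - 1) = v M" using k3 unfolding a_def by simp
  have lq: "lpath (p (k - 1)) (v M) (v (k - 1))" using lp[OF kl] am by simp
  have int: "set (W M) \<inter> set (p (k - 1)) \<subseteq> {v (k - 1), v M}"
  proof -
    have "set (p i) \<inter> set (p (k - 1)) \<subseteq> {v (k - 1), v M}" if iM: "i \<le> M" for i
    proof -
      consider "i = M" | "i = 0" | "0 < i" "i < M" using iM by linarith
      then show ?thesis
      proof cases
        case 1 then show ?thesis using adj[of M] M kl by auto
      next
        case 2 then show ?thesis using clo by auto
      next
        case 3
        then have "set (p i) \<inter> set (p (k - 1)) = {}" using far[of i "k - 1"] M kl by simp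
        then show ?thesis by simp
      qed
    qed
    then show ?thesis unfolding WM(2) by blast
  qed
  define cs where "cs = W M @ butlast (tl (p (k - 1)))"
  note CW = closed_walk[OF WM(1) lq int cs_def]
  have kset: "{..<k} = insert (k - 1) {..M}" using M k3 by auto
  have lcs: "length cs = (\<Sum>i<k. length (p i) - 1)"
  proof -
    have "(\<Sum>i<k. length (p i) - 1) = (length (p (k - 1)) - 1) + (\<Sum>i\<le>M. length (p i) - 1)"
      unfolding kset using M by simp
    then show ?thesis using CW(2) WM(4) L2[OF kl] by simp
  qed
  have ccs: "cyc cs = (\<Union>i<k. upath_edges (p i))"
    using CW(3) WM(3) unfolding kset by auto
  have l3: "3 \<le> length cs"
  proof -
    have "(\<Sum>i<k. (1::nat)) \<le> (\<Sum>i<k. length (p i) - 1)"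
      by (rule sum_mono) (use L2 in fastforce)
    then show ?thesis using lcs k3 by simp
  qed
  have cF: "cyc cs \<subseteq> fst ` F"
  proof -
    have "upath_edges (p i) \<subseteq> fst ` F" if "i < k" for i using pE[OF that] partF[OF gP[OF that]] by blast
    then show ?thesis unfolding ccs by blast
  qed
  have inj: "inj_on snd (sub F (cyc cs))"
  proof (rule inj_onI)
    fix q1 q2 assume q: "q1 \<in> sub F (cyc cs)" "q2 \<in> sub F (cyc cs)" "snd q1 = snd q2"
    then obtain i j where ij: "i < k" "j < k" "fst q1 \<in> upath_edges (p i)" "fst q2 \<in> upath_edges (p j)"
      unfolding sub_def ccs by blast
    have q1F: "q1 \<in> F" "q2 \<in> F" using q unfolding sub_def by simp_all
    have "q1 \<in> sub F (upath_edges (p i))" "q2 \<in> sub F (upath_edges (p j))" using q1F ij unfolding sub_def by simp_all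
    then have qi: "q1 \<in> sub (g i) (upath_edges (p i))" "q2 \<in> sub (g j) (upath_edges (p j))"
      using sub_part[OF gP[OF ij(1)] pE[OF ij(1)]] sub_part[OF gP[OF ij(2)] pE[OF ij(2)]] by simp_all
    show "q1 = q2"
    proof (cases "i = j")
      case True
      have "inj_on snd (sub (g i) (upath_edges (p i)))" using pp[OF ij(1)] unfolding rp_def by simp
      then show ?thesis using qi True q(3) unfolding inj_on_def by blast
    next
      case False
      have "snd q1 \<in> colors (g i)" "snd q2 \<in> colors (g j)" using qi unfolding sub_def colors_def by auto
      moreover have "colors (g i) \<inter> colors (g j) = {}" using coldisj[OF gP[OF ij(1)] gP[OF ij(2)] gne[OF ij(1,2) False]] .
      ultimately show ?thesis using q(3) by auto
    qed
  qed
  have "odd (length cs)" using no_even[OF CW(1) l3 cF inj] .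
  then show False using sum_even lcs by simp
qed

end


lemma aux_edge: "{x, y} \<in> aux_graph Ps \<Longrightarrow>
   \<exists>G w. G \<in> Ps \<and> w \<in> verts G \<and> ((x = Inl G \<and> y = Inr w) \<or> (x = Inr w \<and> y = Inl G))"
proof -
  assume "{x, y} \<in> aux_graph Ps"
  then obtain G w where "{x, y} = {Inl G, Inr w}" "G \<in> Ps" "w \<in> verts G"
    unfolding aux_graph_def by blast
  then show ?thesis by (auto simp: doubleton_eq_iff)
qed

lemma isl_Inl: "isl x \<Longrightarrow> x = Inl (projl x)" by (cases x) auto
lemma nisl_Inr: "\<not> isl x \<Longrightarrow> x = Inr (projr x)" by (cases x) auto

context fr
begin

lemma no_pcyc: "pcyc Ps k g v \<Longrightarrow> False"
proof -
  assume "pcyc Ps k g v"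
  then have "\<exists>k. \<exists>g v. pcyc Ps k g v" by blast
  then obtain k where k: "\<exists>g v. pcyc Ps k g v" "\<forall>m<k. \<not> (\<exists>g v. pcyc Ps m g v)"
    using exists_least_iff[of "\<lambda>k. \<exists>g v. pcyc Ps k g v"] by blast
  then obtain g v where "pcyc Ps k g v" by blast
  then have "minpc Ps k g v" using k(2) unfolding minpc_def by blast
  then show False by (rule no_minpc)
qed

lemma aux_forest: "uforest (aux_graph Ps)"
  unfolding uforest_def
proof
  assume "\<exists>C \<subseteq> aux_graph Ps. is_ucycle C"
  then obtain C where C: "C \<subseteq> aux_graph Ps" "is_ucycle C" by blast
  obtain cs where cs: "distinct cs" "3 \<le> length cs" "C = cyc cs" using ucycle_obtain[OF C(2)] by blast
  define n where "n = length cs"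
  have n3: "3 \<le> n" using cs unfolding n_def by simp
  have csne: "cs \<noteq> []" using cs(2) by auto
  define f where "f i = cs ! (i mod n)" for i
  have fmod: "f (x mod n + y) = f (x + y)" for x y unfolding f_def by (simp add: mod_add_left_eq)
  have finj: "a = b" if "f a = f b" "a < n" "b < n" for a b
    using that cs(1) unfolding f_def n_def by (simp add: nth_eq_iff_index_eq)
  have fE: "{f i, f (Suc i)} \<in> aux_graph Ps" for i
  proof -
    have lt: "i mod n < n" using n3 by simp
    have "{cs ! (i mod n), cs ! (Suc (i mod n) mod n)} \<in> C"
      using cs(3) cyc_index[OF csne] lt unfolding n_def by blast
    moreover have "Suc (i mod n) mod n = Suc i mod n" by (simp add: mod_Suc_eq)
    ultimately show ?thesis using C(1) unfolding f_def by auto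
  qed
  have alt: "isl (f (Suc i)) = (\<not> isl (f i))" for i
    using aux_edge[OF fE[of i]] by auto
  have par: "isl (f i) = (isl (f 0) = even i)" for i
    by (induction i) (use alt in auto)
  have "f n = f 0" unfolding f_def by simp
  then have evn: "even n" using par[of n] by auto
  define k where "k = n div 2"
  have nk: "n = 2 * k" using evn unfolding k_def by simp
  have k2: "2 \<le> k" using n3 nk by simp
  define ofs where "ofs = (if isl (f 0) then 0 else (1::nat))"
  have o1: "ofs \<le> 1" unfolding ofs_def by simp
  have islo: "isl (f (2 * i + ofs))" for i using par[of "2 * i + ofs"] unfolding ofs_def by auto
  define g where "g i = projl (f (2 * i + ofs))" for i
  define v where "v i = projr (f (Suc (2 * i + ofs)))" for i
  have gi: "f (2 * i + ofs) = Inl (g i)" for i unfolding g_def using isl_Inl[OF islo] .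
  have nislo: "\<not> isl (f (Suc (2 * i + ofs)))" for i using alt islo by simp
  have vi: "f (Suc (2 * i + ofs)) = Inr (v i)" for i unfolding v_def using nisl_Inr[OF nislo] .
  have e1: "g i \<in> Ps \<and> v i \<in> verts (g i)" for i
    using aux_edge[OF fE[of "2 * i + ofs"]] gi[of i] vi[of i] by auto
  have e2: "v i \<in> verts (g (Suc i))" for i
  proof -
    have "Suc (Suc (2 * i + ofs)) = 2 * Suc i + ofs" by simp
    then show ?thesis using aux_edge[OF fE[of "Suc (2 * i + ofs)"]] gi[of "Suc i"] vi[of i] by auto
  qed
  have gmod: "g (Suc i mod k) = g (Suc i)" for i
  proof -
    have "2 * (Suc i mod k) = (2 * Suc i) mod n" unfolding nk by (simp add: mult_mod_right)
    then have "f (2 * (Suc i mod k) + ofs) = f (2 * Suc i + ofs)" using fmod[of "2 * Suc i" ofs] by simp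
    then show ?thesis unfolding g_def by simp
  qed
  have ig: "inj_on g {..<k}"
  proof (rule inj_onI)
    fix i j assume ij: "i \<in> {..<k}" "j \<in> {..<k}" "g i = g j"
    then have "f (2 * i + ofs) = f (2 * j + ofs)" using gi by metis
    moreover have "2 * i + ofs < n" "2 * j + ofs < n" using ij(1,2) o1 nk by auto
    ultimately have "2 * i + ofs = 2 * j + ofs" using finj by blast
    then show "i = j" by simp
  qed
  have iv: "inj_on v {..<k}"
  proof (rule inj_onI)
    fix i j assume ij: "i \<in> {..<k}" "j \<in> {..<k}" "v i = v j"
    then have fe: "f (Suc (2 * i + ofs)) = f (Suc (2 * j + ofs))" using vi by metis
    have le: "Suc (2 * i + ofs) \<le> n" "Suc (2 * j + ofs) \<le> n" using ij(1,2) o1 nk by auto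
    have fm: "f x = f (x mod n + 0)" for x using fmod[of x 0] by simp
    have "Suc (2 * i + ofs) mod n = Suc (2 * j + ofs) mod n"
    proof -
      have "f (Suc (2 * i + ofs) mod n) = f (Suc (2 * j + ofs) mod n)" using fe fm by simp
      moreover have "Suc (2 * i + ofs) mod n < n" "Suc (2 * j + ofs) mod n < n" using n3 by simp_all
      ultimately show ?thesis using finj by blast
    qed
    moreover have "x mod n = (if x = n then 0 else x)" if "x \<le> n" for x using that
      by (cases "x = n") simp_all
    ultimately have "(if Suc (2 * i + ofs) = n then 0 else Suc (2 * i + ofs)) = (if Suc (2 * j + ofs) = n then 0 else Suc (2 * j + ofs))"
      using le by simp
    then show "i = j" by (auto split: if_splits)
  qed
  have "pcyc Ps k g v" unfolding pcyc_def using k2 ig iv e1 e2 gmod by simp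
  then show False by (rule no_pcyc)
qed

end


theorem lemma2p6:
  fixes F :: "('v, 'c) cgraph" and Ps :: "('v, 'c) cgraph set"
  assumes "frankenstein F Ps"
  shows "uforest (aux_graph Ps)"
proof -
  interpret fr F Ps by (rule fr.intro[OF assms])
  show ?thesis by (rule aux_forest)
qed

end
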